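(* Let $g\in\mathbb{F}_q[t]$ be a square-free polynomial of odd degree, and assume $3\nmid q$ and $3\nmid q-1$. Then there are infinitely many cubic extensions $K$ of $\mathbb{F}_q(t)$ whose discriminant is relatively prime to $g$ such that $g$ is not Carmichael in $K$.
   Context: $\mathbb{F}_q$ is the finite field with $q$ elements. A finite ring $S$ is a Carmichael ring if $S$ is not a field and $a^{|S|}=a$ for every $a\in S$; an ideal $I$ of a ring $R$ is a Carmichael ideal if $R/I$ is a Carmichael ring. For a finite extension $K$ of $\mathbb{F}_q(t)$, $\mathcal{O}_K$ denotes the integral closure of $\mathbb{F}_q[t]$ in $K$, and an element $\alpha\in\mathcal{O}_K$ is Carmichael in $K$ if $\alpha\mathcal{O}_K$ is a Carmichael ideal of $\mathcal{O}_K$. The discriminant of $K$ is the discriminant ideal of $\mathcal{O}_K$ over $\mathbb{F}_q[t]$; "relatively prime to $g$" means no irreducible factor of $g$ divides it. *)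

theory Defs
  imports "HOL-Algebra.QuotRing"
    "HOL-Computational_Algebra.Polynomial_Factorial"
    "HOL-Computational_Algebra.Squarefree"
    "HOL-Library.Cardinality"
begin

text \<open>F_q is a finite field type 'a (q = CARD('a)); A = F_q[t] is 'a poly;
 F_q(t) is the fraction field 'a poly fract.  A cubic extension K of F_q(t) is presented
 (by the primitive element theorem for prime degree) as F_q(t)[x]/(f) for an irreducible
 cubic f; its elements are represented by the remainders p (degree p < degree f),
 with multiplication modulo f.\<close>

type_synonym 'a ffrac = "'a poly fract"

definition cubic_poly :: "'a::{finite,field} ffrac poly \<Rightarrow> bool" where
  "cubic_poly f \<longleftrightarrow> irreducible f \<and> degree f = 3"

definition ext_field :: "'a::{finite,field} ffrac poly \<Rightarrow> 'a ffrac poly ring" where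
  "ext_field f = \<lparr>carrier = {p. degree p < degree f}, monoid.mult = (\<lambda>p q. (p * q) mod f),
      one = 1, zero = 0, add = (+)\<rparr>"

definition embA :: "'a::{finite,field} poly \<Rightarrow> 'a ffrac poly" where
  "embA c = [:to_fract c:]"

definition integral_closure :: "'a::{finite,field} ffrac poly \<Rightarrow> 'a ffrac poly set" where
  "integral_closure f = {\<alpha>. degree \<alpha> < degree f \<and>
     (\<exists>h :: 'a poly poly. lead_coeff h = 1 \<and> poly (map_poly embA h) \<alpha> mod f = 0)}"

definition OK_ring :: "'a::{finite,field} ffrac poly \<Rightarrow> 'a ffrac poly ring" where
  "OK_ring f = \<lparr>carrier = integral_closure f, monoid.mult = (\<lambda>p q. (p * q) mod f),
      one = 1, zero = 0, add = (+)\<rparr>"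

definition principal_OK :: "'a::{finite,field} ffrac poly \<Rightarrow> 'a poly \<Rightarrow> 'a ffrac poly set" where
  "principal_OK f c = {(embA c * \<beta>) mod f | \<beta>. \<beta> \<in> integral_closure f}"

definition carmichael_ring :: "('b, 'c) ring_scheme \<Rightarrow> bool" where
  "carmichael_ring S \<longleftrightarrow> finite (carrier S) \<and> \<not> field S \<and>
     (\<forall>a \<in> carrier S. a [^]\<^bsub>S\<^esub> card (carrier S) = a)"

definition carmichael_ideal :: "('b, 'c) ring_scheme \<Rightarrow> 'b set \<Rightarrow> bool" where
  "carmichael_ideal R I \<longleftrightarrow> carmichael_ring (R Quot I)"

definition carmichael_in :: "'a::{finite,field} ffrac poly \<Rightarrow> 'a poly \<Rightarrow> bool" where
  "carmichael_in f c \<longleftrightarrow> carmichael_ideal (OK_ring f) (principal_OK f c)"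

definition ext_trace :: "'a::{finite,field} ffrac poly \<Rightarrow> 'a ffrac poly \<Rightarrow> 'a ffrac" where
  "ext_trace f \<alpha> = (\<Sum>i<degree f. coeff ((\<alpha> * monom 1 i) mod f) i)"

definition det3 :: "(nat \<Rightarrow> nat \<Rightarrow> 'b::comm_ring_1) \<Rightarrow> 'b" where
  "det3 M = M 0 0 * M 1 1 * M 2 2 + M 0 1 * M 1 2 * M 2 0 + M 0 2 * M 1 0 * M 2 1
          - M 0 2 * M 1 1 * M 2 0 - M 0 0 * M 1 2 * M 2 1 - M 0 1 * M 1 0 * M 2 2"

definition disc3 :: "'a::{finite,field} ffrac poly \<Rightarrow> (nat \<Rightarrow> 'a ffrac poly) \<Rightarrow> 'a ffrac" where
  "disc3 f a = det3 (\<lambda>i j. ext_trace f ((a i * a j) mod f))"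

text \<open>The discriminant ideal of O_K over A: the A-ideal generated by all d(a_0,a_1,a_2)
 with a_i in O_K (for a PID this is generated by the discriminant of an A-basis).\<close>
definition disc_ideal :: "'a::{finite,field} ffrac poly \<Rightarrow> 'a poly set" where
  "disc_ideal f = {d. \<exists>n (c :: nat \<Rightarrow> 'a poly) (a :: nat \<Rightarrow> nat \<Rightarrow> 'a ffrac poly).
      (\<forall>k<n. \<forall>i<3. a k i \<in> integral_closure f) \<and>
      to_fract d = (\<Sum>k<n. to_fract (c k) * disc3 f (a k))}"

definition rel_prime_to :: "'a::{finite,field} poly set \<Rightarrow> 'a poly \<Rightarrow> bool" where
  "rel_prime_to I g \<longleftrightarrow> (\<forall>p. irreducible p \<and> p dvd g \<longrightarrow> \<not> (\<forall>d\<in>I. p dvd d))"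

definition ext_iso :: "'a::{finite,field} ffrac poly \<Rightarrow> 'a ffrac poly \<Rightarrow> bool" where
  "ext_iso f h \<longleftrightarrow> (\<exists>\<phi>. \<phi> \<in> ring_iso (ext_field f) (ext_field h) \<and> (\<forall>c. \<phi> [:c:] = [:c:]))"

end

theory Submission
  imports Defs "HOL-Number_Theory.Residues"
begin


hide_const (open) up_ring.coeff up_ring.monom

definition tri :: "'b::zero \<Rightarrow> 'b \<Rightarrow> 'b \<Rightarrow> 'b poly" where
  "tri a b c = pCons a (pCons b (pCons c 0))"

definition fC :: "'b::comm_ring_1 \<Rightarrow> 'b poly" where "fC C = [:-C, 0, 0, 1:]"

definition tmul :: "'b::comm_ring_1 \<Rightarrow> 'b\<times>'b\<times>'b \<Rightarrow> 'b\<times>'b\<times>'b \<Rightarrow> 'b\<times>'b\<times>'b" where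
  "tmul C u v = (case u of (a0,a1,a2) \<Rightarrow> case v of (b0,b1,b2) \<Rightarrow>
     (a0*b0 + C*(a1*b2+a2*b1), a0*b1+a1*b0+C*(a2*b2), a0*b2+a1*b1+a2*b0))"

definition trp :: "'b::zero\<times>'b\<times>'b \<Rightarrow> 'b poly" where
  "trp u = (case u of (a,b,c) \<Rightarrow> tri a b c)"

lemma coeff_tri [simp]: "coeff (tri a b c) 0 = a" "coeff (tri a b c) (Suc 0) = b"
  "coeff (tri a b c) (Suc (Suc 0)) = c" "coeff (tri a b c) (Suc (Suc (Suc n))) = 0"
  by (simp_all add: tri_def)

lemma coeff_tri2 [simp]: "coeff (tri a b c) 1 = b" "coeff (tri a b c) 2 = c"
  by (simp_all add: tri_def numeral_2_eq_2)

lemma degree_tri: "degree (tri a b c) < 3"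
proof -
  have "degree (tri a b c) \<le> 2"
    by (rule degree_le) (auto simp: tri_def coeff_pCons split: nat.splits)
  thus ?thesis by simp
qed

lemma tri_eq_iff [simp]: "tri a b c = tri a' b' c' \<longleftrightarrow> a = a' \<and> b = b' \<and> c = c'"
  by (simp add: tri_def)

lemma tri_coeffs: assumes "degree p < 3" shows "p = tri (coeff p 0) (coeff p 1) (coeff p 2)"
proof (rule poly_eqI)
  fix n show "coeff p n = coeff (tri (coeff p 0) (coeff p 1) (coeff p 2)) n"
  proof (cases "n \<ge> 3")
    case True
    have n: "n = Suc (Suc (Suc (n - 3)))" using True by simp
    have "coeff p n = 0" using True assms by (intro coeff_eq_0) auto
    then show ?thesis by (subst n) (simp del: Suc_eq_plus1)
  next
    case False
    then have "n = 0 \<or> n = 1 \<or> n = 2" by auto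
    thus ?thesis by auto
  qed
qed

lemma tri_add: "tri a b c + tri a' b' c' = tri (a+a') (b+b') (c+c')"
  by (simp add: tri_def)
lemma tri_diff: "tri a b c - tri a' b' c' = tri (a-a') (b-b') (c-c')"
  by (simp add: tri_def)
lemma tri_minus: "- tri a b c = tri (-a) (-b) (-c)"
  by (simp add: tri_def)
lemma tri_const_mult: "[:k:] * tri a b c = tri (k*a) (k*b) (k*c)"
  by (simp add: tri_def mult.commute)
lemma tri_000 [simp]: "tri 0 0 0 = 0"
  by (simp add: tri_def)
lemma tri_a00: "tri a 0 0 = [:a:]"
  by (simp add: tri_def)

lemma degree_fC: "degree (fC (C::'b::{comm_ring_1,zero_neq_one})) = 3"
  by (simp add: fC_def)

lemma fC_ne0: "fC (C::'b::{comm_ring_1,zero_neq_one}) \<noteq> 0"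
  using degree_fC[of C] by auto

lemma tri_mult_decomp:
  "tri a0 a1 a2 * tri b0 b1 b2 = [:a1*b2+a2*b1, a2*b2:] * fC C +
     tri (a0*b0 + C*(a1*b2+a2*b1)) (a0*b1+a1*b0+C*(a2*b2)) (a0*b2+a1*b1+a2*b0)"
  by (simp add: tri_def fC_def algebra_simps)

lemma tri_mult_mod:
  fixes C :: "'b::field"
  shows "(tri a0 a1 a2 * tri b0 b1 b2) mod fC C =
     tri (a0*b0 + C*(a1*b2+a2*b1)) (a0*b1+a1*b0+C*(a2*b2)) (a0*b2+a1*b1+a2*b0)"
proof -
  have "(tri a0 a1 a2 * tri b0 b1 b2) mod fC C = tri (a0*b0 + C*(a1*b2+a2*b1)) (a0*b1+a1*b0+C*(a2*b2)) (a0*b2+a1*b1+a2*b0) mod fC C"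
    by (simp only: tri_mult_decomp[where C=C] mod_mult_self3)
  also have "\<dots> = tri (a0*b0 + C*(a1*b2+a2*b1)) (a0*b1+a1*b0+C*(a2*b2)) (a0*b2+a1*b1+a2*b0)"
    by (rule mod_poly_less) (simp add: degree_fC degree_tri)
  finally show ?thesis .
qed

lemma trp_mult_mod:
  fixes C :: "'b::field"
  shows "(trp u * trp v) mod fC C = trp (tmul C u v)"
  by (cases u; cases v) (simp add: trp_def tmul_def tri_mult_mod)


definition Nm :: "'b::comm_ring_1 \<Rightarrow> 'b\<times>'b\<times>'b \<Rightarrow> 'b" where
  "Nm C u = (case u of (a,b,c) \<Rightarrow> a^3 + C*b^3 + C^2*c^3 - 3*C*a*b*c)"

definition chi :: "'b::comm_ring_1 \<Rightarrow> 'b\<times>'b\<times>'b \<Rightarrow> 'b poly" where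
  "chi C u = (case u of (a,b,c) \<Rightarrow> [:- Nm C u, 3*a^2 - 3*C*b*c, -3*a, 1:])"

definition adj :: "'b::comm_ring_1 \<Rightarrow> 'b\<times>'b\<times>'b \<Rightarrow> 'b\<times>'b\<times>'b" where
  "adj C u = (case u of (a,b,c) \<Rightarrow> (a^2 - C*b*c, C*c^2 - a*b, b^2 - a*c))"

lemma tmul_adj: "tmul C u (adj C u) = (Nm C u, 0, 0)"
  by (cases u) (auto simp: tmul_def adj_def Nm_def algebra_simps power2_eq_square power3_eq_cube)

lemma CH_identity:
  fixes C :: "'b::comm_ring_1"
  shows "[:- Nm C u:] + [:3*fst u^2 - 3*C*fst (snd u)*snd (snd u):] * trp u + [:-3*fst u:] * trp (tmul C u u)
     + trp (tmul C u (tmul C u u)) = 0"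
proof -
  obtain a b c where u: "u = (a,b,c)" by (cases u)
  have e: "\<And>k x y z. [:k:] = tri k 0 0" by (simp add: tri_a00)
  have m: "\<And>k x y z. tri k 0 0 * tri x y z = tri (k*x) (k*y) (k*z)" by (simp add: tri_def mult.commute)
  show ?thesis unfolding u
    apply (simp only: e m trp_def tmul_def Nm_def split tri_add fst_conv snd_conv)
    apply (simp only: tri_000[symmetric] tri_eq_iff)
    by (simp add: algebra_simps power2_eq_square power3_eq_cube)
qed

lemma chi_monic: "lead_coeff (chi (C::'b::{comm_ring_1}) u) = 1" "degree (chi (C::'b::{comm_ring_1}) u) = 3"
  by (cases u; simp add: chi_def)+

lemma CH:
  fixes C :: "'b::field"
  shows "pcompose (chi C u) (trp u) mod fC C = 0"
proof -
  define g where "g = trp u"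
  define u2 where "u2 = tmul C u u"
  define u3 where "u3 = tmul C u u2"
  define D2 where "D2 = g*g - trp u2"
  define D3 where "D3 = g*trp u2 - trp u3"
  have d2: "fC C dvd D2" unfolding D2_def u2_def g_def trp_mult_mod[symmetric] by simp
  have d3: "fC C dvd D3" unfolding D3_def u3_def g_def trp_mult_mod[symmetric] by simp
  obtain a b c where u: "u = (a,b,c)" by (cases u)
  have "pcompose (chi C u) g = [:- Nm C u:] + [:3*a^2 - 3*C*b*c:] * g + [:-3*a:] * (g*g) + g*(g*g)"
    by (simp add: chi_def u pcompose_pCons algebra_simps)
  also have "\<dots> = ([:- Nm C u:] + [:3*a^2 - 3*C*b*c:] * g + [:-3*a:] * trp u2 + trp u3)
        + ([:-3*a:] * D2 + D3 + g * D2)"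
    by (simp add: D2_def D3_def algebra_simps smult_add_right smult_diff_right)
  also have "[:- Nm C u:] + [:3*a^2 - 3*C*b*c:] * g + [:-3*a:] * trp u2 + trp u3 = 0"
    using CH_identity[of C u] by (simp add: u g_def u2_def u3_def)
  finally have "pcompose (chi C u) g = [:-3*a:] * D2 + D3 + g * D2" by simp
  moreover have "fC C dvd [:-3*a:] * D2 + D3 + g * D2" using d2 d3 by (meson dvd_add dvd_mult)
  ultimately show ?thesis by (simp add: g_def)
qed

lemma poly_chi: "poly (chi C u) t = Nm C (t - fst u, - fst (snd u), - snd (snd u))"
  by (cases u) (simp add: chi_def Nm_def algebra_simps power2_eq_square power3_eq_cube)

lemma cubic_irred:
  fixes m :: "'b::field poly"
  assumes "degree m = 3" "\<And>t. poly m t \<noteq> 0"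
  shows "irreducible m"
proof (rule irreducibleI)
  show "m \<noteq> 0" using assms by auto
  have m0: "m \<noteq> 0" using assms by auto
  show "\<not> m dvd 1" using assms is_unit_iff_degree[OF m0] by auto
  fix a b assume ab: "m = a * b"
  show "a dvd 1 \<or> b dvd 1"
  proof (rule ccontr)
    assume nu: "\<not> (a dvd 1 \<or> b dvd 1)"
    have a0: "a \<noteq> 0" and b0: "b \<noteq> 0" using ab assms by auto
    have da: "degree a \<ge> 1" using nu a0 by (auto simp: is_unit_iff_degree)
    have db: "degree b \<ge> 1" using nu b0 by (auto simp: is_unit_iff_degree)
    have "degree a + degree b = 3" using ab a0 b0 assms by (simp add: degree_mult_eq)
    then have "degree a = 1 \<or> degree b = 1" using da db by auto
    then obtain p where p: "p dvd m" "degree p = 1" using ab by (metis dvd_triv_left dvd_triv_right)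
    have "p = [:coeff p 0, coeff p 1:]"
      by (rule poly_eqI) (auto simp: coeff_pCons coeff_eq_0 p(2) split: nat.splits)
    moreover have c1: "coeff p 1 \<noteq> 0" using p(2) by (metis leading_coeff_0_iff degree_0 one_neq_zero)
    ultimately have "poly p (- coeff p 0 / coeff p 1) = 0"
      by (metis (no_types, lifting) add.right_inverse mult.commute mult_1 nonzero_eq_divide_eq poly_pCons
          add.right_neutral mult_zero_right poly_0 times_divide_eq_left mult_minus_left)
    then have "poly m (- coeff p 0 / coeff p 1) = 0" using p(1) by (metis dvdE mult_eq_0_iff poly_mult)
    with assms(2) show False by blast
  qed
qed



hide_const (open) module.smult

section \<open>Elementary arithmetic in K[t] for a field K (no normalization available)\<close>

lemma unit_poly_iff: "is_unit (p::'a::field poly) \<longleftrightarrow> p \<noteq> 0 \<and> degree p = 0"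
  by (cases "p = 0") (auto simp: is_unit_iff_degree)

lemma irr_bezout:
  fixes P a :: "'a::field poly"
  assumes P: "irreducible P" and nd: "\<not> P dvd a"
  shows "\<exists>u v. u*P + v*a = 1"
proof -
  define S where "S = {e. e \<noteq> 0 \<and> (\<exists>u v. e = u*P + v*a)}"
  have P0: "P \<noteq> 0" using P by (simp add: irreducible_def)
  have "P = 1*P + 0*a" by simp
  then have PS: "P \<in> S" using P0 unfolding S_def by blast
  obtain e where eS: "e \<in> S" and emin: "\<And>e'. e' \<in> S \<Longrightarrow> degree e \<le> degree e'"
    using ex_has_least_nat[of "\<lambda>e. e \<in> S" P degree] PS by blast
  from eS obtain u v where e: "e = u*P + v*a" and e0: "e \<noteq> 0" unfolding S_def by auto
  have closed: "x mod e = 0" if "\<exists>u v. x = u*P + v*a" for x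
  proof (rule ccontr)
    assume nz: "x mod e \<noteq> 0"
    from that obtain u' v' where x: "x = u'*P + v'*a" by auto
    have "x mod e = x - (x div e) * e" by (simp add: minus_div_mult_eq_mod)
    also have "\<dots> = (u' - (x div e)*u)*P + (v' - (x div e)*v)*a" by (simp add: x e algebra_simps)
    finally have "x mod e \<in> S" using nz unfolding S_def by blast
    then have "degree e \<le> degree (x mod e)" by (rule emin)
    moreover have "degree (x mod e) < degree e" using degree_mod_less'[OF e0 nz] .
    ultimately show False by simp
  qed
  have "P mod e = 0" by (rule closed) (rule exI[of _ 1], rule exI[of _ 0], simp)
  then have eP: "e dvd P" by (simp add: dvd_eq_mod_eq_0)
  have "a mod e = 0" by (rule closed) (rule exI[of _ 0], rule exI[of _ 1], simp)
  then have ea: "e dvd a" by (simp add: dvd_eq_mod_eq_0)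
  from eP obtain w where w: "P = e * w" by auto
  have "is_unit e \<or> is_unit w" using P w by (simp add: irreducible_def)
  moreover have "\<not> is_unit w"
  proof
    assume "is_unit w"
    then have "P dvd e" using w by (metis dvd_mult_unit_iff dvd_refl)
    with ea nd show False using dvd_trans by blast
  qed
  ultimately have "is_unit e" by simp
  then obtain z where z: "1 = e * z" by auto
  show ?thesis by (rule exI[of _ "z*u"], rule exI[of _ "z*v"]) (simp add: z e algebra_simps)
qed

lemma irr_dvd_mult:
  fixes P a b :: "'a::field poly"
  assumes P: "irreducible P" and d: "P dvd a * b"
  shows "P dvd a \<or> P dvd b"
proof (rule disjCI)
  assume "\<not> P dvd b"
  then obtain u v where uv: "u*P + v*b = 1" using irr_bezout[OF P] by blast
  have "a = a * (u*P + v*b)" using uv by simp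
  also have "\<dots> = (u*a)*P + v*(a*b)" by (simp add: algebra_simps)
  finally have a: "a = (u*a)*P + v*(a*b)" .
  have "P dvd (u*a)*P + v*(a*b)" by (rule dvd_add[OF dvd_triv_right dvd_mult[OF d]])
  then show "P dvd a" using a by simp
qed

lemma irr_dvd_pow:
  fixes P a :: "'a::field poly"
  assumes P: "irreducible P" and d: "P dvd a ^ n"
  shows "P dvd a"
  using d
proof (induction n)
  case 0 then show ?case using P by (simp add: irreducible_def)
next
  case (Suc n) then show ?case using irr_dvd_mult[OF P] by auto
qed

lemma irr_factor_exists:
  fixes a :: "'a::field poly"
  assumes "degree a > 0"
  shows "\<exists>P. irreducible P \<and> P dvd a \<and> lead_coeff P = 1"
proof -
  define S where "S = {e. degree e > 0 \<and> e dvd a}"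
  have aS: "a \<in> S" using assms unfolding S_def by auto
  obtain e where eS: "e \<in> S" and emin: "\<And>e'. e' \<in> S \<Longrightarrow> degree e \<le> degree e'"
    using ex_has_least_nat[of "\<lambda>e. e \<in> S" a degree] aS by blast
  have e0: "e \<noteq> 0" using eS unfolding S_def by auto
  have irr: "irreducible e"
  proof (rule irreducibleI)
    show "e \<noteq> 0" by fact
    show "\<not> is_unit e" using eS unfolding S_def unit_poly_iff by auto
    fix x y assume xy: "e = x * y"
    then have x0: "x \<noteq> 0" and y0: "y \<noteq> 0" using e0 by auto
    have dsum: "degree e = degree x + degree y" using xy x0 y0 by (simp add: degree_mult_eq)
    show "is_unit x \<or> is_unit y"
    proof (rule ccontr)
      assume "\<not> (is_unit x \<or> is_unit y)"
      then have dx: "degree x > 0" and dy: "degree y > 0" using x0 y0 by (auto simp: unit_poly_iff)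
      have "x dvd e" using xy by simp
      moreover have "e dvd a" using eS unfolding S_def by simp
      ultimately have "x dvd a" by (rule dvd_trans)
      then have "x \<in> S" using dx unfolding S_def by auto
      then have "degree e \<le> degree x" by (rule emin)
      with dsum dy show False by simp
    qed
  qed
  define P where "P = smult (inverse (lead_coeff e)) e"
  have lc0: "lead_coeff e \<noteq> 0" using e0 by simp
  have u: "is_unit [:inverse (lead_coeff e):]" using lc0 by (simp add: unit_poly_iff)
  have "irreducible ([:inverse (lead_coeff e):] * e)" using irreducible_mult_unit_left[OF u] irr by blast
  then have "irreducible P" by (simp add: P_def)
  moreover have "P dvd a" using eS lc0 unfolding S_def P_def by (simp add: smult_dvd_iff)
  moreover have "lead_coeff P = 1" using lc0 by (simp add: P_def)
  ultimately show ?thesis by blast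
qed


lemma to_fract_power [simp]: "to_fract (x ^ n) = to_fract x ^ n"
  by (induction n) simp_all

lemma frac_repr: obtains a b where "b \<noteq> 0" "x = to_fract a / to_fract (b::'a::idom)"
  by (cases x) (auto simp: Fract_conv_to_fract)

lemma inA_div:
  assumes "(b::'a::idom) \<noteq> 0"
  shows "to_fract a / to_fract b \<in> range to_fract \<longleftrightarrow> b dvd a"
proof
  assume "to_fract a / to_fract b \<in> range to_fract"
  then obtain k where "to_fract a / to_fract b = to_fract k" by auto
  then have "to_fract a = to_fract b * to_fract k" using assms by (simp add: field_simps)
  then have "a = b * k" by (metis to_fract_eq_iff to_fract_mult)
  then show "b dvd a" by simp
next
  assume "b dvd a" then obtain k where "a = b * k" by auto
  then show "to_fract a / to_fract b \<in> range to_fract" using assms by simp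
qed

lemma irr_nonunit: "irreducible (Q::'a::field poly) \<Longrightarrow> Q \<noteq> 0 \<and> degree Q > 0"
  by (auto simp: irreducible_def unit_poly_iff)

lemma noncube_A:
  fixes Q :: "'a::field poly"
  assumes Q: "irreducible Q"
  shows "b \<noteq> 0 \<Longrightarrow> a^3 \<noteq> Q * b^3"
proof (induction "degree b" arbitrary: a b rule: less_induct)
  case less
  show ?case
  proof
    assume e: "a^3 = Q * b^3"
    have Q0: "Q \<noteq> 0" and dQ: "degree Q > 0" using irr_nonunit[OF Q] by auto
    have "Q dvd a^3" using e by simp
    then have "Q dvd a" by (rule irr_dvd_pow[OF Q])
    then obtain a' where a: "a = Q * a'" by auto
    have "Q * (Q^2 * a'^3) = Q * b^3" using e by (simp add: a power3_eq_cube power2_eq_square ac_simps)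
    then have e2: "Q^2 * a'^3 = b^3" using Q0 by simp
    then have "Q dvd b^3" by (metis dvd_mult2 dvd_triv_left power2_eq_square)
    then have "Q dvd b" by (rule irr_dvd_pow[OF Q])
    then obtain b' where b: "b = Q * b'" by auto
    have b'0: "b' \<noteq> 0" using less.prems b by auto
    have "Q^2 * a'^3 = Q^2 * (Q * b'^3)" using e2 by (simp add: b power3_eq_cube power2_eq_square ac_simps)
    then have e3: "a'^3 = Q * b'^3" using Q0 by simp
    have "degree b = degree Q + degree b'" using b Q0 b'0 by (simp add: degree_mult_eq)
    then have "degree b' < degree b" using dQ by simp
    from less.hyps[OF this b'0] e3 show False by simp
  qed
qed

lemma noncube:
  fixes Q :: "'a::field poly"
  assumes Q: "irreducible Q"
  shows "r^3 \<noteq> to_fract Q"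
proof
  assume h: "r^3 = to_fract Q"
  obtain a b where b: "b \<noteq> 0" and r: "r = to_fract a / to_fract b" by (rule frac_repr)
  have "to_fract a ^ 3 = to_fract Q * to_fract b ^ 3" using h b unfolding r
    by (simp add: power_divide field_simps)
  then have "to_fract (a^3) = to_fract (Q * b^3)" by simp
  then have "a^3 = Q * b^3" by (metis to_fract_eq_iff)
  with noncube_A[OF Q b] show False by simp
qed

lemma VL_step:
  fixes Q P a b :: "'a::field poly"
  assumes Q: "irreducible Q" and P: "irreducible P"
    and h1: "P^2 dvd Q*a*b" and h2: "P^3 dvd Q*a^3 + Q^2*b^3"
  shows "P dvd a \<and> P dvd b"
proof (cases "P dvd Q")
  case True
  then obtain w where w: "Q = P * w" by auto
  have "is_unit P \<or> is_unit w" using Q w by (simp add: irreducible_def)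
  then have wu: "is_unit w" using P by (auto simp: irreducible_def)
  have P0: "P \<noteq> 0" using P by (auto simp: irreducible_def)
  have "P * P dvd P * (w*a*b)" using h1 w by (simp add: power2_eq_square ac_simps)
  then have "P dvd w*a*b" using P0 by simp
  then have "P dvd a*b" using wu by (simp add: mult.assoc dvd_mult_unit_iff')
  then have ab: "P dvd a \<or> P dvd b" using irr_dvd_mult[OF P] by simp
  have "P * P^2 dvd P * (w * (a^3 + Q*b^3))" using h2 w
    by (simp add: power2_eq_square power3_eq_cube algebra_simps)
  then have "P^2 dvd w * (a^3 + Q*b^3)" using P0 by simp
  then have h3: "P^2 dvd a^3 + Q*b^3" using wu by (simp add: dvd_mult_unit_iff')
  show ?thesis
  proof (cases "P dvd a")
    case True
    then obtain a' where "a = P * a'" by auto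
    then have "P^2 dvd a^3" by (simp add: power2_eq_square power3_eq_cube)
    then have "P^2 dvd Q*b^3" using h3 by (metis add_diff_cancel_left' dvd_diff)
    then have "P * P dvd P * (w * b^3)" using w by (simp add: power2_eq_square ac_simps)
    then have "P dvd w*b^3" using P0 by simp
    then have "P dvd b^3" using wu by (simp add: dvd_mult_unit_iff')
    then have "P dvd b" using irr_dvd_pow[OF P] by blast
    with True show ?thesis by simp
  next
    case False
    with ab have pb: "P dvd b" by simp
    then obtain b' where "b = P * b'" by auto
    then have "P^2 dvd Q*b^3" using w by (simp add: power2_eq_square power3_eq_cube)
    then have "P^2 dvd a^3" using h3 by (metis add_diff_cancel_right' dvd_diff)
    then have "P dvd a^3" by (metis dvd_mult_left power2_eq_square)
    then have "P dvd a" using irr_dvd_pow[OF P] by blast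
    with False show ?thesis by simp
  qed
next
  case False
  have "P dvd Q*a*b" using h1 by (metis dvd_mult_left power2_eq_square)
  then have ab: "P dvd a \<or> P dvd b" using irr_dvd_mult[OF P] False by (metis mult.assoc)
  have h3: "P dvd Q*a^3 + Q^2*b^3" using h2 by (metis dvd_mult_left power3_eq_cube)
  show ?thesis
  proof (cases "P dvd a")
    case True
    then obtain a' where a': "a = P * a'" by auto
    have "Q*a^3 = P * (Q*P^2*a'^3)" by (simp add: a' power2_eq_square power3_eq_cube ac_simps)
    then have "P dvd Q*a^3" by (metis dvd_triv_left)
    then have "P dvd Q^2*b^3" using h3 by (metis add_diff_cancel_left' dvd_diff)
    then have "P dvd Q^2 \<or> P dvd b^3" using irr_dvd_mult[OF P] by blast
    then have "P dvd b" using False irr_dvd_pow[OF P] by blast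
    with True show ?thesis by simp
  next
    case f2: False
    with ab have pb: "P dvd b" by simp
    then obtain b' where b': "b = P * b'" by auto
    have "Q^2*b^3 = P * (Q^2*P^2*b'^3)" by (simp add: b' power2_eq_square power3_eq_cube ac_simps)
    then have "P dvd Q^2*b^3" by (metis dvd_triv_left)
    then have "P dvd Q*a^3" using h3 by (metis add_diff_cancel_right' dvd_diff)
    then have "P dvd Q \<or> P dvd a^3" using irr_dvd_mult[OF P] by blast
    then have "P dvd a" using False irr_dvd_pow[OF P] by blast
    with f2 show ?thesis by simp
  qed
qed

lemma VL_A:
  fixes Q :: "'a::field poly"
  assumes Q: "irreducible Q"
  shows "d \<noteq> 0 \<Longrightarrow> d^2 dvd Q*a*b \<Longrightarrow> d^3 dvd Q*a^3 + Q^2*b^3 \<Longrightarrow> d dvd a \<and> d dvd b"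
proof (induction "degree d" arbitrary: d a b rule: less_induct)
  case less
  show ?case
  proof (cases "degree d = 0")
    case True
    then have "is_unit d" using less.prems by (simp add: unit_poly_iff)
    then show ?thesis by auto
  next
    case False
    then obtain P where P: "irreducible P" "P dvd d" using irr_factor_exists[of d] by auto
    have P0: "P \<noteq> 0" and dP: "degree P > 0" using irr_nonunit[OF P(1)] by auto
    have "P^2 dvd d^2" "P^3 dvd d^3" using P(2) by (auto intro: dvd_power_same)
    then have "P^2 dvd Q*a*b" "P^3 dvd Q*a^3 + Q^2*b^3" using less.prems dvd_trans by blast+
    from VL_step[OF Q P(1) this] have "P dvd a" "P dvd b" by auto
    then obtain a' b' where a: "a = P*a'" and b: "b = P*b'" by (auto elim!: dvdE)
    obtain d' where d: "d = P*d'" using P(2) by auto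
    have d'0: "d' \<noteq> 0" using less.prems d by auto
    have eq1: "d^2 = P^2 * d'^2" "Q*a*b = P^2 * (Q*a'*b')"
      by (simp_all add: a b d power2_eq_square ac_simps)
    have "P^2 * d'^2 dvd P^2 * (Q*a'*b')" using less.prems(2) unfolding eq1 .
    then have h1: "d'^2 dvd Q*a'*b'" using P0 by (subst (asm) dvd_times_left_cancel_iff) auto
    have eq2: "d^3 = P^3 * d'^3" "Q*a^3 + Q^2*b^3 = P^3 * (Q*a'^3 + Q^2*b'^3)"
      by (simp_all add: a b d power_mult_distrib algebra_simps)
    have "P^3 * d'^3 dvd P^3 * (Q*a'^3 + Q^2*b'^3)" using less.prems(3) unfolding eq2 .
    then have h2: "d'^3 dvd Q*a'^3 + Q^2*b'^3" using P0 by (subst (asm) dvd_times_left_cancel_iff) auto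
    have "degree d = degree P + degree d'" using d P0 d'0 by (simp add: degree_mult_eq)
    then have "degree d' < degree d" using dP by simp
    from less.hyps[OF this d'0 h1 h2] show ?thesis by (simp add: a b d)
  qed
qed


lemma lead_fract_poly [simp]: "lead_coeff (fract_poly p) = to_fract (lead_coeff p)"
  by (simp add: degree_map_poly coeff_map_poly)

lemma degree_fract_poly [simp]: "degree (fract_poly p) = degree p"
  by (simp add: degree_map_poly)

lemma coeff_fract_poly [simp]: "coeff (fract_poly p) n = to_fract (coeff p n)"
  by (simp add: coeff_map_poly)

lemma GP:
  fixes P :: "'a::field poly" and u v :: "'a poly poly"
  assumes P: "irreducible P" and h: "\<And>i. P dvd coeff (u*v) i"
  shows "(\<forall>i. P dvd coeff u i) \<or> (\<forall>i. P dvd coeff v i)"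
proof (rule ccontr)
  assume "\<not> ?thesis"
  then obtain i1 j1 where i1: "\<not> P dvd coeff u i1" and j1: "\<not> P dvd coeff v j1" by auto
  define i0 where "i0 = (LEAST i. \<not> P dvd coeff u i)"
  define j0 where "j0 = (LEAST i. \<not> P dvd coeff v i)"
  have i0: "\<not> P dvd coeff u i0" unfolding i0_def by (rule LeastI[of _ i1]) (rule i1)
  have j0: "\<not> P dvd coeff v j0" unfolding j0_def by (rule LeastI[of _ j1]) (rule j1)
  have bi: "P dvd coeff u k" if "k < i0" for k using not_less_Least[OF that[unfolded i0_def]] by simp
  have bj: "P dvd coeff v k" if "k < j0" for k using not_less_Least[OF that[unfolded j0_def]] by simp
  define n where "n = i0 + j0"
  have "coeff (u*v) n = (\<Sum>k\<le>n. coeff u k * coeff v (n-k))" by (rule coeff_mult)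
  also have "\<dots> = coeff u i0 * coeff v (n - i0) + (\<Sum>k\<in>{..n}-{i0}. coeff u k * coeff v (n-k))"
    by (subst sum.remove[of _ i0]) (auto simp: n_def)
  finally have eq: "coeff (u*v) n = coeff u i0 * coeff v j0 + (\<Sum>k\<in>{..n}-{i0}. coeff u k * coeff v (n-k))"
    by (simp add: n_def)
  have "P dvd (\<Sum>k\<in>{..n}-{i0}. coeff u k * coeff v (n-k))"
  proof (rule dvd_sum)
    fix k assume k: "k \<in> {..n}-{i0}"
    show "P dvd coeff u k * coeff v (n-k)"
    proof (cases "k < i0")
      case True then show ?thesis using bi by (simp add: dvd_mult2)
    next
      case False
      with k have "n - k < j0" by (auto simp: n_def)
      then show ?thesis using bj by (simp add: dvd_mult)
    qed
  qed
  moreover have "P dvd coeff (u*v) n" by (rule h)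
  ultimately have "P dvd coeff u i0 * coeff v j0" unfolding eq by (simp add: dvd_add_left_iff)
  then show False using irr_dvd_mult[OF P] i0 j0 by blast
qed

lemma div_out:
  fixes P :: "'a::field poly" and u :: "'a poly poly"
  assumes "\<And>i. P dvd coeff u i"
  shows "u = smult P (map_poly (\<lambda>c. c div P) u)"
  by (rule poly_eqI) (simp add: coeff_map_poly assms dvd_mult_div_cancel)

lemma smult_cancel:
  fixes P :: "'a::idom" assumes "P \<noteq> 0" "smult P p = smult P q" shows "p = q"
proof (rule poly_eqI)
  fix n have "coeff (smult P p) n = coeff (smult P q) n" by (simp only: assms(2))
  then show "coeff p n = coeff q n" using assms(1) by simp
qed

lemma GAUSS_A:
  fixes h :: "'a::field poly poly"
  assumes hm: "lead_coeff h = 1"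
  shows "m0 * k0 = smult D h \<Longrightarrow> D = d1*d2 \<Longrightarrow> lead_coeff m0 = d1 \<Longrightarrow> lead_coeff k0 = d2
     \<Longrightarrow> D \<noteq> 0 \<Longrightarrow> d1 dvd coeff m0 i"
proof (induction "degree D" arbitrary: D d1 d2 m0 k0 i rule: less_induct)
  case less
  show ?case
  proof (cases "degree D = 0")
    case True
    then have "is_unit D" using less.prems by (simp add: unit_poly_iff)
    then have "is_unit d1" using less.prems(2) is_unit_mult_iff by blast
    then show ?thesis by auto
  next
    case False
    then obtain P where P: "irreducible P" "P dvd D" using irr_factor_exists[of D] by auto
    have P0: "P \<noteq> 0" and dP: "degree P > 0" using irr_nonunit[OF P(1)] by auto
    obtain D' where D: "D = P * D'" using P(2) by auto
    have D'0: "D' \<noteq> 0" using less.prems D by auto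
    have degD: "degree D' < degree D" using D P0 D'0 dP by (simp add: degree_mult_eq)
    have "P dvd coeff (m0*k0) j" for j using less.prems(1) P(2) by simp
    then have "(\<forall>j. P dvd coeff m0 j) \<or> (\<forall>j. P dvd coeff k0 j)" by (rule GP[OF P(1)])
    then show ?thesis
    proof
      assume hm0: "\<forall>j. P dvd coeff m0 j"
      define m' where "m' = map_poly (\<lambda>c. c div P) m0"
      have m0: "m0 = smult P m'" unfolding m'_def by (rule div_out) (use hm0 in auto)
      define d1' where "d1' = lead_coeff m'"
      have d1: "d1 = P * d1'" using less.prems(3) P0 by (simp add: m0 d1'_def)
      have D': "D' = d1' * d2" using less.prems(2) D d1 P0 by (simp add: ac_simps)
      have "smult P (m' * k0) = m0 * k0" by (simp add: m0)
      also have "\<dots> = smult D h" by (rule less.prems(1))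
      also have "\<dots> = smult P (smult (d1'*d2) h)" by (simp add: D D')
      finally have e: "m' * k0 = smult (d1'*d2) h" by (rule smult_cancel[OF P0])
      note D' 
      from less.hyps[OF degD e[folded D'] D' d1'_def[symmetric] less.prems(4) D'0]
      have "d1' dvd coeff m' i" .
      then show ?thesis by (simp add: m0 d1)
    next
      assume hk0: "\<forall>j. P dvd coeff k0 j"
      define k' where "k' = map_poly (\<lambda>c. c div P) k0"
      have k0: "k0 = smult P k'" unfolding k'_def by (rule div_out) (use hk0 in auto)
      define d2' where "d2' = lead_coeff k'"
      have d2: "d2 = P * d2'" using less.prems(4) P0 by (simp add: k0 d2'_def)
      have D': "D' = d1 * d2'" using less.prems(2) D d2 P0 by (simp add: ac_simps)
      have "smult P (m0 * k') = m0 * k0" by (simp add: k0)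
      also have "\<dots> = smult D h" by (rule less.prems(1))
      also have "\<dots> = smult P (smult (d1*d2') h)" by (simp add: D D')
      finally have e: "m0 * k' = smult (d1*d2') h" by (rule smult_cancel[OF P0])
      note D' 
      from less.hyps[OF degD e[folded D'] D' less.prems(3) d2'_def[symmetric] D'0]
      show ?thesis .
    qed
  qed
qed

lemma clear_denom:
  fixes p :: "'a::idom fract poly"
  shows "\<exists>d p0. d \<noteq> 0 \<and> smult (to_fract d) p = fract_poly p0"
proof (induction p)
  case 0 show ?case by (rule exI[of _ 1], rule exI[of _ 0]) simp
next
  case (pCons c q)
  then obtain d q0 where d: "d \<noteq> 0" and q: "smult (to_fract d) q = fract_poly q0" by auto
  obtain a b where b: "b \<noteq> 0" and c: "c = to_fract a / to_fract b" by (rule frac_repr)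
  have "smult (to_fract (b*d)) (pCons c q) = fract_poly (pCons (a*d) (smult b q0))"
  proof (rule poly_eqI)
    fix n show "coeff (smult (to_fract (b*d)) (pCons c q)) n = coeff (fract_poly (pCons (a*d) (smult b q0))) n"
    proof (cases n)
      case 0 then show ?thesis using b by (simp add: c field_simps)
    next
      case (Suc m)
      have "coeff (smult (to_fract d) q) m = coeff (fract_poly q0) m" using q by simp
      then show ?thesis using Suc by (simp add: mult.assoc)
    qed
  qed
  then show ?case using b d by (intro exI[of _ "b*d"] exI) auto
qed

lemma GAUSS_F:
  fixes m k :: "'a::field poly fract poly" and h :: "'a poly poly"
  assumes mm: "lead_coeff m = 1" and hm: "lead_coeff h = 1" and e: "m * k = fract_poly h"
  shows "coeff m i \<in> range to_fract"
proof -
  obtain d1 m0 where d1: "d1 \<noteq> 0" and m0: "smult (to_fract d1) m = fract_poly m0" using clear_denom by blast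
  obtain d2 k0 where d2: "d2 \<noteq> 0" and k0: "smult (to_fract d2) k = fract_poly k0" using clear_denom by blast
  have "lead_coeff m * lead_coeff k = 1" using e hm by (metis lead_coeff_mult lead_fract_poly to_fract_1)
  then have lk: "lead_coeff k = 1" using mm by simp
  have "fract_poly (m0 * k0) = smult (to_fract (d1*d2)) (m * k)"
    by (simp add: m0[symmetric] k0[symmetric] mult_ac)
  also have "\<dots> = fract_poly (smult (d1*d2) h)" by (simp add: e)
  finally have "fract_poly (m0 * k0) = fract_poly (smult (d1*d2) h)" .
  then have e0: "m0 * k0 = smult (d1*d2) h" by (simp only: fract_poly_eq_iff)
  have "to_fract (lead_coeff m0) = to_fract d1"
    using arg_cong[OF m0, of lead_coeff] mm d1 by simp
  then have l1: "lead_coeff m0 = d1" by simp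
  have "to_fract (lead_coeff k0) = to_fract d2"
    using arg_cong[OF k0, of lead_coeff] lk d2 by simp
  then have l2: "lead_coeff k0 = d2" by simp
  have dv: "d1 dvd coeff m0 i" by (rule GAUSS_A[OF hm e0 refl l1 l2]) (use d1 d2 in simp)
  have "coeff m i = to_fract (coeff m0 i) / to_fract d1"
    using arg_cong[OF m0, of "\<lambda>p. coeff p i"] d1 by (simp add: field_simps)
  then show ?thesis using inA_div[OF d1] dv by simp
qed


definition inA :: "'a::idom fract \<Rightarrow> bool" where "inA x \<longleftrightarrow> x \<in> range to_fract"

lemma to_fract_of_nat [simp]: "to_fract (of_nat k) = of_nat k"
  by (induction k) simp_all

lemma to_fract_numeral [simp]: "to_fract (numeral n) = numeral n"
  by (metis of_nat_numeral to_fract_of_nat)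

lemma inA_to_fract [simp]: "inA (to_fract x)" by (simp add: inA_def)
lemma inA_E: "inA x \<Longrightarrow> (\<And>y. x = to_fract y \<Longrightarrow> P) \<Longrightarrow> P" by (auto simp: inA_def)
lemma inA_add: "inA x \<Longrightarrow> inA y \<Longrightarrow> inA (x + y)" by (auto elim!: inA_E simp del: to_fract_add simp: to_fract_add[symmetric])
lemma inA_diff: "inA x \<Longrightarrow> inA y \<Longrightarrow> inA (x - y)" by (auto elim!: inA_E simp del: to_fract_diff simp: to_fract_diff[symmetric])
lemma inA_mult: "inA x \<Longrightarrow> inA y \<Longrightarrow> inA (x * y)" by (auto elim!: inA_E simp del: to_fract_mult simp: to_fract_mult[symmetric])
lemma inA_minus: "inA x \<Longrightarrow> inA (- x)" by (auto elim!: inA_E simp del: to_fract_uminus simp: to_fract_uminus[symmetric])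
lemma inA_minus_iff [simp]: "inA (- x) \<longleftrightarrow> inA x" using inA_minus[of x] inA_minus[of "-x"] by auto
lemma inA_power: "inA x \<Longrightarrow> inA (x ^ n)" by (auto elim!: inA_E simp del: to_fract_power simp: to_fract_power[symmetric])
lemma inA_numeral [simp]: "inA (numeral n)" using inA_to_fract[of "numeral n"] by simp
lemma inA_1 [simp]: "inA 1" using inA_to_fract[of 1] by simp
lemma inA_0 [simp]: "inA 0" using inA_to_fract[of 0] by simp

lemma inA_div3:
  fixes x :: "'a::field poly fract"
  assumes three: "(3::'a) \<noteq> 0" and h: "inA (3 * x)"
  shows "inA x"
proof -
  have t3: "(3::'a poly fract) = to_fract [:3:]" by (simp add: numeral_poly[symmetric])
  have "[:inverse (3::'a):] * [:3:] = 1" using three by (simp add: one_pCons)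
  then have "to_fract [:inverse (3::'a):] * to_fract [:3:] = 1" by (metis to_fract_mult to_fract_1)
  then have e: "to_fract [:inverse (3::'a):] * 3 = 1" by (simp only: t3)
  have "x = (to_fract [:inverse (3::'a):] * 3) * x" by (simp only: e mult_1_left)
  also have "\<dots> = to_fract [:inverse (3::'a):] * (3 * x)" by (simp only: mult.assoc)
  finally have "x = to_fract [:inverse (3::'a):] * (3 * x)" .
  then show ?thesis using h by (metis inA_mult inA_to_fract)
qed

section \<open>Norm anisotropy and irreducibility\<close>

lemma poly_fC: "poly (fC C) t = t^3 - C"
  by (simp add: fC_def algebra_simps power3_eq_cube)

context
  fixes Q :: "'a::field poly"
  assumes Q: "irreducible Q"
begin

lemma fC_irred: "irreducible (fC (to_fract Q))"
  by (rule cubic_irred) (auto simp: degree_fC poly_fC noncube[OF Q])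

lemma Q0: "Q \<noteq> 0" using Q by (auto simp: irreducible_def)

lemma dvd_small: "fC (to_fract Q) dvd p \<Longrightarrow> degree p < 3 \<Longrightarrow> p = 0"
proof (rule ccontr)
  assume "fC (to_fract Q) dvd p" "degree p < 3" "p \<noteq> 0"
  then have "degree (fC (to_fract Q)) \<le> degree p" by (intro dvd_imp_degree_le)
  with \<open>degree p < 3\<close> show False by (simp add: degree_fC)
qed

lemma adj_zero:
  fixes a b c :: "'a poly fract"
  assumes "adj (to_fract Q) (a,b,c) = (0,0,0)"
  shows "a = 0 \<and> b = 0 \<and> c = 0"
proof -
  let ?C = "to_fract Q"
  have C0: "?C \<noteq> 0" using Q0 by simp
  have e1: "a^2 = ?C*b*c" and e2: "?C*c^2 = a*b" and e3: "b^2 = a*c"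
    using assms by (auto simp: adj_def)
  show ?thesis
  proof (cases "a = 0")
    case True
    then have "b = 0" using e3 by simp
    moreover have "c = 0" using e2 True C0 by simp
    ultimately show ?thesis using True by simp
  next
    case a0: False
    have c: "c = b^2 / a" using e3 a0 by (simp add: field_simps)
    show ?thesis
    proof (cases "b = 0")
      case True then have "c = 0" using c by simp
      then have "a = 0" using e1 True by simp
      with a0 show ?thesis by simp
    next
      case b0: False
      have "b = 0 \<or> ?C * b^3 = a^3" using e2 a0 unfolding c
        by (simp add: field_simps power2_eq_square power3_eq_cube ac_simps)
      then have "?C * b^3 = a^3" using b0 by simp
      then have "(a/b)^3 = ?C" using b0 by (simp add: power_divide field_simps)
      with noncube[OF Q] show ?thesis by blast
    qed
  qed
qed

lemma Nm_zero:
  assumes "Nm (to_fract Q) u = 0"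
  shows "u = (0,0,0)"
proof -
  let ?f = "fC (to_fract Q)"
  have "(trp u * trp (adj (to_fract Q) u)) mod ?f = 0"
    by (simp only: trp_mult_mod tmul_adj assms) (simp add: trp_def)
  then have "?f dvd trp u * trp (adj (to_fract Q) u)" by (simp add: dvd_eq_mod_eq_0)
  then have "?f dvd trp u \<or> ?f dvd trp (adj (to_fract Q) u)" by (rule irr_dvd_mult[OF fC_irred])
  moreover have "degree (trp v) < 3" for v :: "'a poly fract \<times> _" by (cases v) (simp add: trp_def degree_tri)
  ultimately have "trp u = 0 \<or> trp (adj (to_fract Q) u) = 0" using dvd_small by blast
  then show ?thesis
  proof
    assume "trp u = 0" then show ?thesis by (cases u) (simp add: trp_def tri_000[symmetric] del: tri_000)
  next
    assume "trp (adj (to_fract Q) u) = 0"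
    then have "adj (to_fract Q) u = (0,0,0)"
      by (cases "adj (to_fract Q) u") (simp add: trp_def tri_000[symmetric] del: tri_000)
    then show ?thesis using adj_zero by (cases u) auto
  qed
qed

lemma chi_irred:
  assumes "b \<noteq> 0 \<or> c \<noteq> 0"
  shows "irreducible (chi (to_fract Q) (a,b,c))"
proof (rule cubic_irred)
  show "degree (chi (to_fract Q) (a, b, c)) = 3" by (rule chi_monic)
  fix t show "poly (chi (to_fract Q) (a, b, c)) t \<noteq> 0"
    using Nm_zero[of "(t - a, -b, -c)"] assms by (auto simp: poly_chi)
qed

end

lemma lin_irred: "irreducible [:-a, 1::'b::field:]"
proof (rule irreducibleI)
  show "[:-a, 1::'b:] \<noteq> 0" by simp
  show "\<not> is_unit [:-a, 1::'b:]" by (simp add: unit_poly_iff)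
  fix x y assume xy: "[:-a, 1::'b:] = x * y"
  then have x0: "x \<noteq> 0" and y0: "y \<noteq> 0" by auto
  have "degree (x * y) = 1" by (simp add: xy[symmetric])
  then have "degree x + degree y = 1" using x0 y0 by (simp add: degree_mult_eq)
  then have "degree x = 0 \<or> degree y = 0" by auto
  then show "is_unit x \<or> is_unit y" using x0 y0 by (auto simp: unit_poly_iff)
qed

lemma rootdvd:
  fixes m H f :: "'b::field poly" and \<beta> :: "'b poly"
  assumes m: "irreducible m" and f: "degree f > 0"
    and hm: "pcompose m \<beta> mod f = 0" and hH: "pcompose H \<beta> mod f = 0"
  shows "m dvd H"
proof (rule ccontr)
  assume "\<not> m dvd H"
  then obtain u v where uv: "u*m + v*H = 1" using irr_bezout[OF m] by blast
  have "pcompose 1 \<beta> = pcompose u \<beta> * pcompose m \<beta> + pcompose v \<beta> * pcompose H \<beta>"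
    by (simp add: uv[symmetric] pcompose_add pcompose_mult)
  moreover have "f dvd pcompose u \<beta> * pcompose m \<beta> + pcompose v \<beta> * pcompose H \<beta>"
  proof -
    have "f dvd pcompose m \<beta>" "f dvd pcompose H \<beta>" using hm hH by (simp_all add: dvd_eq_mod_eq_0)
    then show ?thesis by (rule dvd_add[OF dvd_mult dvd_mult])
  qed
  ultimately have "f dvd 1" by (simp add: pcompose_1)
  then show False using f by (simp add: unit_poly_iff)
qed


lemma map_embA: fixes h :: "'a::{finite,field} poly poly"
  shows "map_poly embA h = map_poly (\<lambda>x. [:x:]) (fract_poly h)"
  by (rule poly_eqI) (simp add: coeff_map_poly embA_def)

lemma integral_iff:
  "\<beta> \<in> integral_closure f \<longleftrightarrow> degree \<beta> < degree f \<and>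
     (\<exists>h. lead_coeff h = 1 \<and> pcompose (fract_poly h) \<beta> mod f = 0)"
  by (simp add: integral_closure_def map_embA pcompose_altdef)

lemma fract_chi:
  "fract_poly (chi Q (p,r,s)) = chi (to_fract Q) (to_fract p, to_fract r, to_fract s)"
  by (simp add: chi_def Nm_def map_poly_pCons)

lemma OK_sup:
  fixes Q :: "'a::{finite,field} poly"
  shows "tri (to_fract p) (to_fract r) (to_fract s) \<in> integral_closure (fC (to_fract Q))"
proof -
  let ?u = "(to_fract p, to_fract r, to_fract s)"
  have "pcompose (fract_poly (chi Q (p,r,s))) (tri (to_fract p) (to_fract r) (to_fract s)) mod fC (to_fract Q) = 0"
    using CH[of "to_fract Q" ?u] by (simp add: fract_chi trp_def)
  moreover have "lead_coeff (chi Q (p,r,s)) = 1" by (rule chi_monic)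
  ultimately show ?thesis unfolding integral_iff by (auto simp: degree_fC degree_tri)
qed

lemma VL_F:
  fixes Q :: "'a::field poly" and b c :: "'a poly fract"
  assumes Q: "irreducible Q"
    and h1: "inA (to_fract Q * b * c)" and h2: "inA (to_fract Q * b^3 + (to_fract Q)^2 * c^3)"
  shows "inA b \<and> inA c"
proof -
  obtain x1 d1 where d1: "d1 \<noteq> 0" and b1: "b = to_fract x1 / to_fract d1" by (rule frac_repr)
  obtain y1 d2 where d2: "d2 \<noteq> 0" and c1: "c = to_fract y1 / to_fract d2" by (rule frac_repr)
  define d where "d = d1 * d2"
  define x where "x = x1 * d2"
  define y where "y = y1 * d1"
  have d0: "d \<noteq> 0" using d1 d2 by (simp add: d_def)
  have b: "b = to_fract x / to_fract d" using d1 d2 by (simp add: b1 x_def d_def field_simps)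
  have c: "c = to_fract y / to_fract d" using d1 d2 by (simp add: c1 y_def d_def field_simps)
  have "to_fract Q * b * c = to_fract (Q*x*y) / to_fract (d^2)"
    by (simp add: b c power2_eq_square)
  then have "d^2 dvd Q*x*y" using h1 inA_div[of "d^2" "Q*x*y"] d0 by (simp add: inA_def)
  moreover have "to_fract Q * b^3 + (to_fract Q)^2 * c^3 = to_fract (Q*x^3 + Q^2*y^3) / to_fract (d^3)"
    using d0 by (simp add: b c power_divide add_divide_distrib)
  then have "d^3 dvd Q*x^3 + Q^2*y^3" using h2 inA_div[of "d^3" "Q*x^3 + Q^2*y^3"] d0 by (simp add: inA_def)
  ultimately have "d dvd x \<and> d dvd y" using VL_A[OF Q d0] by blast
  then show ?thesis using inA_div[OF d0] by (simp add: b c inA_def)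
qed

lemma OK_sub:
  fixes Q :: "'a::{finite,field} poly"
  assumes Q: "irreducible Q" and three: "(3::'a) \<noteq> 0"
    and int: "\<beta> \<in> integral_closure (fC (to_fract Q))"
  shows "\<exists>p r s. \<beta> = tri (to_fract p) (to_fract r) (to_fract s)"
proof -
  let ?C = "to_fract Q" let ?f = "fC (to_fract Q)"
  from int obtain h where deg: "degree \<beta> < 3" and hm: "lead_coeff h = 1"
    and hr: "pcompose (fract_poly h) \<beta> mod ?f = 0"
    unfolding integral_iff by (auto simp: degree_fC)
  define a where "a = coeff \<beta> 0"
  define b where "b = coeff \<beta> 1"
  define c where "c = coeff \<beta> 2"
  have \<beta>: "\<beta> = tri a b c" unfolding a_def b_def c_def by (rule tri_coeffs[OF deg])
  have fdeg: "degree ?f > 0" by (simp add: degree_fC)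
  have key: "inA (coeff m i)" if m: "irreducible m" "lead_coeff m = 1" "pcompose m \<beta> mod ?f = 0" for m i
  proof -
    have "m dvd fract_poly h" by (rule rootdvd[OF m(1) fdeg m(3) hr])
    then obtain k where "fract_poly h = m * k" by auto
    then have "m * k = fract_poly h" by simp
    from GAUSS_F[OF m(2) hm this] show ?thesis unfolding inA_def .
  qed
  show ?thesis
  proof (cases "b = 0 \<and> c = 0")
    case True
    have "pcompose [:-a, 1:] \<beta> = 0" using True by (simp add: \<beta> pcompose_pCons tri_a00)
    then have "inA (coeff [:-a, 1:] 0)" by (intro key) (simp_all add: lin_irred)
    then have "inA a" by simp
    then obtain p where "a = to_fract p" by (auto simp: inA_def)
    then show ?thesis using True by (intro exI[of _ p] exI[of _ 0]) (simp add: \<beta>)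
  next
    case False
    have bc: "b \<noteq> 0 \<or> c \<noteq> 0" using False by simp
    let ?m = "chi ?C (a,b,c)"
    have m: "irreducible ?m" "lead_coeff ?m = 1" "pcompose ?m \<beta> mod ?f = 0"
      using chi_irred[OF Q bc] chi_monic[of ?C "(a,b,c)"] CH[of ?C "(a,b,c)"]
      by (simp_all add: \<beta> trp_def)
    have c2: "inA (-3*a)" using key[OF m, of 2] by (simp add: chi_def numeral_2_eq_2)
    have c1: "inA (3*a^2 - 3*?C*b*c)" using key[OF m, of 1] by (simp add: chi_def)
    have c0: "inA (- Nm ?C (a,b,c))" using key[OF m, of 0] by (simp add: chi_def)
    have ia: "inA a" using c2 inA_div3[OF three, of a] by (metis inA_minus_iff mult_minus_left)
    have "inA (3 * (?C*b*c))"
    proof -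
      have "3 * (?C*b*c) = 3*a^2 - (3*a^2 - 3*?C*b*c)" by (simp add: algebra_simps)
      moreover have "inA (3*a^2)" using ia by (intro inA_mult inA_power) simp_all
      ultimately show ?thesis using c1 by (metis inA_diff)
    qed
    then have ibc: "inA (?C*b*c)" by (rule inA_div3[OF three])
    have "?C*b^3 + ?C^2*c^3 = - (- Nm ?C (a,b,c)) - a^3 + 3*a*(?C*b*c)"
      by (simp add: Nm_def algebra_simps)
    moreover have "inA (- (- Nm ?C (a,b,c)) - a^3 + 3*a*(?C*b*c))"
    proof -
      have "inA (- (- Nm ?C (a,b,c)))" using c0 by simp
      moreover have "inA (a^3)" using ia by (rule inA_power)
      moreover have "inA (3*a*(?C*b*c))" by (rule inA_mult[OF inA_mult[OF inA_numeral ia] ibc])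
      ultimately show ?thesis by (intro inA_add inA_diff)
    qed
    ultimately have "inA (?C*b^3 + ?C^2*c^3)" by simp
    with VL_F[OF Q ibc] have "inA b" "inA c" by auto
    with ia show ?thesis by (auto simp: inA_def \<beta>)
  qed
qed


lemma monom_tri: "monom 1 0 = tri 1 0 0" "monom 1 (Suc 0) = tri 0 1 0" "monom 1 (Suc (Suc 0)) = tri 0 0 1"
  by (auto intro!: poly_eqI simp: coeff_monom tri_def coeff_pCons split: nat.splits)

lemma trace_tri:
  fixes C :: "'a::{finite,field} poly fract"
  shows "ext_trace (fC C) (tri a b c) = 3 * a"
proof -
  have "ext_trace (fC C) (tri a b c) = (\<Sum>i<3. coeff ((tri a b c * monom 1 i) mod fC C) i)"
    by (simp add: ext_trace_def degree_fC)
  also have "\<dots> = coeff ((tri a b c * monom 1 0) mod fC C) 0 + coeff ((tri a b c * monom 1 1) mod fC C) 1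
      + coeff ((tri a b c * monom 1 2) mod fC C) 2"
    by (simp add: numeral_3_eq_3 numeral_2_eq_2)
  also have "\<dots> = 3 * a" by (simp only: numeral_2_eq_2 One_nat_def monom_tri tri_mult_mod coeff_tri) simp
  finally show ?thesis .
qed

lemma trace_prod:
  fixes C :: "'a::{finite,field} poly fract"
  shows "ext_trace (fC C) ((tri a0 a1 a2 * tri b0 b1 b2) mod fC C) = 3 * (a0*b0 + C*(a1*b2+a2*b1))"
  by (simp only: tri_mult_mod trace_tri)

definition bas :: "nat \<Rightarrow> 'b::{zero,one} poly" where
  "bas i = (if i = 0 then tri 1 0 0 else if i = 1 then tri 0 1 0 else tri 0 0 1)"

lemma disc_bas:
  fixes Q :: "'a::{finite,field} poly"
  shows "disc3 (fC (to_fract Q)) bas = - 27 * (to_fract Q)^2"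
proof -
  let ?f = "fC (to_fract Q)" let ?C = "to_fract Q"
  have e: "ext_trace ?f ((bas i * bas j) mod ?f) = (if i = 0 \<and> j = 0 then 3 else if (i=1 \<and> j=2) \<or> (i=2 \<and> j=1) then 3*?C else 0)"
    if "i \<le> 2" "j \<le> 2" for i j
  proof -
    have "i = 0 \<or> i = 1 \<or> i = 2" "j = 0 \<or> j = 1 \<or> j = 2" using that by auto
    then show ?thesis by (elim disjE) (simp_all add: bas_def trace_prod)
  qed
  show ?thesis unfolding disc3_def det3_def by (simp add: e power2_eq_square)
qed

lemma disc_in:
  fixes Q :: "'a::{finite,field} poly"
  shows "- 27 * Q^2 \<in> disc_ideal (fC (to_fract Q))"
proof -
  have bi: "bas i \<in> integral_closure (fC (to_fract Q))" for i
    using OK_sup[of 1 0 0 Q] OK_sup[of 0 1 0 Q] OK_sup[of 0 0 1 Q] by (simp add: bas_def)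
  show ?thesis unfolding disc_ideal_def
    by (rule CollectI, rule exI[of _ 1], rule exI[of _ "\<lambda>_. 1"], rule exI[of _ "\<lambda>_. bas"])
       (simp add: bi disc_bas)
qed

lemma three_unit: "(3::'a::field) \<noteq> 0 \<Longrightarrow> is_unit (27::'a poly)"
proof -
  assume "(3::'a) \<noteq> 0"
  moreover have "(27::'a) = 3*3*3" by simp
  ultimately have "(27::'a) \<noteq> 0" by (metis mult_eq_0_iff)
  then have "is_unit [:27::'a:]" by (simp add: unit_poly_iff)
  moreover have "(27::'a poly) = [:27:]" by (simp add: numeral_poly)
  ultimately show ?thesis by simp
qed

lemma rel_prime_disc:
  fixes Q g :: "'a::{finite,field} poly"
  assumes Q: "irreducible Q" and three: "(3::'a) \<noteq> 0" and ndvd: "\<not> Q dvd g"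
  shows "rel_prime_to (disc_ideal (fC (to_fract Q))) g"
  unfolding rel_prime_to_def
proof (intro allI impI notI)
  fix p assume p: "irreducible p \<and> p dvd g" and all: "\<forall>d\<in>disc_ideal (fC (to_fract Q)). p dvd d"
  have "p dvd - 27 * Q^2" using all disc_in[of Q] by blast
  then have "p dvd 27 * Q^2" by simp
  then have "p dvd Q^2" using three_unit[OF three] by (simp add: dvd_mult_unit_iff')
  then have "p dvd Q" using irr_dvd_pow p by blast
  then obtain w where w: "Q = p * w" by auto
  have "is_unit p \<or> is_unit w" using Q w by (simp add: irreducible_def)
  then have "is_unit w" using p by (auto simp: irreducible_def)
  then have "Q dvd p" using w by (metis dvd_mult_unit_iff dvd_refl)
  then show False using p ndvd dvd_trans by blast
qed


definition Of :: "'a::idom \<Rightarrow> 'a \<Rightarrow> 'a \<Rightarrow> 'a fract poly" where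
  "Of p r s = tri (to_fract p) (to_fract r) (to_fract s)"

lemma Of_eq_iff [simp]: "Of p r s = Of p' r' s' \<longleftrightarrow> p = p' \<and> r = r' \<and> s = s'"
  by (simp add: Of_def)

lemma Of_add: "Of p r s + Of p' r' s' = Of (p+p') (r+r') (s+s')"
  by (simp add: Of_def tri_add)

lemma Of_0: "Of 0 0 0 = 0" by (simp add: Of_def)

lemma card_polys_aux:
  "card {p :: 'a::{finite,zero} poly. \<forall>i\<ge>n. coeff p i = 0} = CARD('a)^n"
proof (induction n)
  case 0
  have "{p :: 'a poly. \<forall>i\<ge>0. coeff p i = 0} = {0}" by (auto intro: poly_eqI)
  then show ?case by simp
next
  case (Suc n)
  have eq: "{p :: 'a poly. \<forall>i\<ge>Suc n. coeff p i = 0} = (\<lambda>(a,q). pCons a q) ` (UNIV \<times> {q. \<forall>i\<ge>n. coeff q i = 0})"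
  proof (intro equalityI subsetI)
    fix p :: "'a poly" assume "p \<in> {p. \<forall>i\<ge>Suc n. coeff p i = 0}"
    then have h: "\<forall>i\<ge>Suc n. coeff p i = 0" by simp
    obtain a q where p: "p = pCons a q" by (cases p)
    have "\<forall>i\<ge>n. coeff q i = 0" using h by (auto simp: p)
    then show "p \<in> (\<lambda>(a,q). pCons a q) ` (UNIV \<times> {q. \<forall>i\<ge>n. coeff q i = 0})" using p by auto
  next
    fix p assume "p \<in> (\<lambda>(a,q). pCons a q) ` (UNIV \<times> {q :: 'a poly. \<forall>i\<ge>n. coeff q i = 0})"
    then obtain a q where p: "p = pCons a q" and q: "\<forall>i\<ge>n. coeff q i = 0" by auto
    show "p \<in> {p. \<forall>i\<ge>Suc n. coeff p i = 0}"
    proof (clarify)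
      fix i assume "Suc n \<le> i"
      then show "coeff p i = 0" using q by (cases i) (auto simp: p)
    qed
  qed
  have inj: "inj_on (\<lambda>(a,q). pCons a q) (UNIV \<times> {q :: 'a poly. \<forall>i\<ge>n. coeff q i = 0})"
    by (auto simp: inj_on_def)
  have fin: "finite {q :: 'a poly. \<forall>i\<ge>n. coeff q i = 0}"
  proof (rule ccontr)
    assume "infinite {q :: 'a poly. \<forall>i\<ge>n. coeff q i = 0}"
    then have "card {q :: 'a poly. \<forall>i\<ge>n. coeff q i = 0} = 0" by simp
    then show False using Suc.IH by simp
  qed
  show ?case unfolding eq using inj fin
    by (simp add: card_image card_cartesian_product Suc.IH)
qed

lemma card_polys:
  fixes g :: "'b::field poly"
  assumes "degree g > 0"
  shows "card {p :: 'a::{finite,zero} poly. degree p < degree g} = CARD('a)^(degree g)"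
proof -
  have "{p :: 'a poly. degree p < degree g} = {p. \<forall>i\<ge>degree g. coeff p i = 0}"
  proof (intro equalityI subsetI)
    fix x :: "'a poly" assume "x \<in> {p. degree p < degree g}"
    then show "x \<in> {p. \<forall>i\<ge>degree g. coeff p i = 0}" by (auto intro: coeff_eq_0)
  next
    fix x :: "'a poly" assume "x \<in> {p. \<forall>i\<ge>degree g. coeff p i = 0}"
    then have h: "\<forall>i\<ge>degree g. coeff x i = 0" by simp
    have "degree x \<le> degree g - 1" by (rule degree_le) (use h assms in auto)
    then show "x \<in> {p. degree p < degree g}" using assms by simp
  qed
  then show ?thesis by (simp add: card_polys_aux)
qed


primrec xpow :: "'b::field \<Rightarrow> nat \<Rightarrow> 'b poly" where
  "xpow C 0 = 1"
| "xpow C (Suc n) = (xpow C n * tri 0 1 0) mod fC C"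

lemma xpow_closed:
  "xpow C n = (if n mod 3 = 0 then tri (C^(n div 3)) 0 0 else if n mod 3 = 1 then tri 0 (C^(n div 3)) 0
      else tri 0 0 (C^(n div 3)))"
proof (induction n)
  case 0 then show ?case by (simp add: tri_a00)
next
  case (Suc n)
  have "n mod 3 = 0 \<or> n mod 3 = 1 \<or> n mod 3 = 2" by presburger
  then show ?case
  proof (elim disjE)
    assume h: "n mod 3 = 0"
    have "Suc n mod 3 = 1" "Suc n div 3 = n div 3" using h by presburger+
    then show ?thesis using Suc h by (simp add: tri_mult_mod)
  next
    assume h: "n mod 3 = 1"
    have "Suc n mod 3 = 2" "Suc n div 3 = n div 3" using h by presburger+
    then show ?thesis using Suc h by (simp add: tri_mult_mod)
  next
    assume h: "n mod 3 = 2"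
    have "Suc n mod 3 = 0" "Suc n div 3 = Suc (n div 3)" using h by presburger+
    then show ?thesis using Suc h by (simp add: tri_mult_mod mult.commute)
  qed
qed

context
  fixes Q g :: "'a::{finite,field} poly"
  assumes Q: "irreducible Q" and three: "(3::'a) \<noteq> 0" and dg: "degree g > 0"
begin

lemma O_eq: "integral_closure (fC (to_fract Q)) = {Of p r s | p r s. True}"
  using OK_sup[of _ _ _ Q] OK_sub[OF Q three] by (auto simp: Of_def)

lemma embA_Of: "(embA g * Of p r s) mod fC (to_fract Q) = Of (g*p) (g*r) (g*s)"
proof -
  have "embA g * Of p r s = Of (g*p) (g*r) (g*s)" by (simp add: embA_def Of_def tri_def)
  moreover have "Of (g*p) (g*r) (g*s) mod fC (to_fract Q) = Of (g*p) (g*r) (g*s)"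
    by (rule mod_poly_less) (simp add: Of_def degree_tri degree_fC)
  ultimately show ?thesis by simp
qed

lemma I_eq: "principal_OK (fC (to_fract Q)) g = {Of (g*p) (g*r) (g*s) | p r s. True}"
  unfolding principal_OK_def O_eq
proof (intro equalityI subsetI)
  fix x assume "x \<in> {embA g * \<beta> mod fC (to_fract Q) |\<beta>. \<beta> \<in> {Of p r s |p r s. True}}"
  then show "x \<in> {Of (g*p) (g*r) (g*s) | p r s. True}" by (auto simp: embA_Of)
next
  fix x assume "x \<in> {Of (g*p) (g*r) (g*s) | p r s. True}"
  then obtain p r s where x: "x = Of (g*p) (g*r) (g*s)" by auto
  then have "x = embA g * Of p r s mod fC (to_fract Q)" by (simp add: embA_Of)
  then show "x \<in> {embA g * \<beta> mod fC (to_fract Q) |\<beta>. \<beta> \<in> {Of p r s |p r s. True}}" by blast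
qed

definition CS :: "'a poly \<Rightarrow> 'a poly \<Rightarrow> 'a poly \<Rightarrow> 'a poly fract poly set" where
  "CS p r s = {x. \<exists>a b c. x = Of a b c \<and> g dvd a - p \<and> g dvd b - r \<and> g dvd c - s}"

lemma coset_gen: "(I +>\<^bsub>OK_ring F\<^esub> a) = (\<lambda>h. h + a) ` I"
  by (auto simp: a_r_coset_def' OK_ring_def)

lemma coset_Of: "principal_OK (fC (to_fract Q)) g +>\<^bsub>OK_ring (fC (to_fract Q))\<^esub> Of p r s = CS p r s"
proof -
  have "(\<lambda>h. h + Of p r s) ` {Of (g*p) (g*r) (g*s) | p r s. True} = CS p r s"
  proof (intro equalityI subsetI)
    fix x assume "x \<in> (\<lambda>h. h + Of p r s) ` {Of (g*p) (g*r) (g*s) | p r s. True}"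
    then obtain h where h: "h \<in> {Of (g*p) (g*r) (g*s) | p r s. True}" "x = h + Of p r s" by auto
    then obtain p' r' s' where "h = Of (g*p') (g*r') (g*s')" by auto
    then have x: "x = Of (g*p'+p) (g*r'+r) (g*s'+s)" using h by (simp add: Of_add)
    then show "x \<in> CS p r s" unfolding CS_def by auto
  next
    fix x assume "x \<in> CS p r s"
    then obtain a b c where x: "x = Of a b c" and d: "g dvd a - p" "g dvd b - r" "g dvd c - s"
      unfolding CS_def by auto
    from d obtain p' r' s' where "a - p = g*p'" "b - r = g*r'" "c - s = g*s'" by (auto elim!: dvdE)
    then have "x = Of (g*p') (g*r') (g*s') + Of p r s" by (simp add: x Of_add algebra_simps)
    then show "x \<in> (\<lambda>h. h + Of p r s) ` {Of (g*p) (g*r) (g*s) | p r s. True}" by blast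
  qed
  then show ?thesis by (simp add: coset_gen I_eq)
qed

lemma Of_in_CS: "Of a b c \<in> CS p r s \<longleftrightarrow> g dvd a - p \<and> g dvd b - r \<and> g dvd c - s"
  unfolding CS_def by auto

lemma CS_eq_iff: "CS p r s = CS p' r' s' \<longleftrightarrow> g dvd p - p' \<and> g dvd r - r' \<and> g dvd s - s'"
proof
  assume "CS p r s = CS p' r' s'"
  moreover have "Of p r s \<in> CS p r s" by (simp add: Of_in_CS)
  ultimately show "g dvd p - p' \<and> g dvd r - r' \<and> g dvd s - s'" by (simp add: Of_in_CS)
next
  assume h: "g dvd p - p' \<and> g dvd r - r' \<and> g dvd s - s'"
  have k: "g dvd x - u \<longleftrightarrow> g dvd x - u'" if "g dvd u - u'" for x u u' :: "'a poly"
  proof -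
    have "x - u' = (x - u) + (u - u')" by simp
    then show ?thesis using that by (metis dvd_add dvd_diff diff_add_cancel add_diff_cancel_left')
  qed
  show "CS p r s = CS p' r' s'" unfolding CS_def using h k by blast
qed

lemma small_eq: "degree p < degree g \<Longrightarrow> degree p' < degree g \<Longrightarrow> g dvd p - p' \<Longrightarrow> p = p'"
proof (rule ccontr)
  assume h: "degree p < degree g" "degree p' < degree g" "g dvd p - p'" "p \<noteq> p'"
  then have "degree g \<le> degree (p - p')" by (intro dvd_imp_degree_le) auto
  moreover have "degree (p - p') < degree g" using h degree_diff_le_max[of p p'] by simp
  ultimately show False by simp
qed

abbreviation "SS \<equiv> OK_ring (fC (to_fract Q)) Quot principal_OK (fC (to_fract Q)) g"

lemma carrier_SS: "carrier SS = (\<lambda>(p,r,s). CS p r s) ` ({p. degree p < degree g} \<times> {p. degree p < degree g} \<times> {p. degree p < degree g})"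
proof -
  have red: "CS p r s = CS (p mod g) (r mod g) (s mod g)" for p r s
    by (simp add: CS_eq_iff mod_eq_dvd_iff minus_mod_eq_mult_div[symmetric])
  have md: "degree (p mod g) < degree g" for p
  proof -
    have "g \<noteq> 0" using dg by auto
    then show ?thesis using degree_mod_less'[of g p] dg by (cases "p mod g = 0") auto
  qed
  have "carrier SS = (\<Union>a\<in>integral_closure (fC (to_fract Q)). {principal_OK (fC (to_fract Q)) g +>\<^bsub>OK_ring (fC (to_fract Q))\<^esub> a})"
    by (simp add: FactRing_def A_RCOSETS_def' OK_ring_def)
  also have "\<dots> = {CS p r s | p r s. True}"
  proof (intro equalityI subsetI)
    fix X assume "X \<in> (\<Union>a\<in>integral_closure (fC (to_fract Q)). {principal_OK (fC (to_fract Q)) g +>\<^bsub>OK_ring (fC (to_fract Q))\<^esub> a})"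
    then obtain p r s where "X = principal_OK (fC (to_fract Q)) g +>\<^bsub>OK_ring (fC (to_fract Q))\<^esub> Of p r s"
      by (auto simp: O_eq)
    then show "X \<in> {CS p r s | p r s. True}" by (auto simp: coset_Of)
  next
    fix X assume "X \<in> {CS p r s | p r s. True}"
    then obtain p r s where X: "X = CS p r s" by auto
    have "Of p r s \<in> integral_closure (fC (to_fract Q))" by (auto simp: O_eq)
    then show "X \<in> (\<Union>a\<in>integral_closure (fC (to_fract Q)). {principal_OK (fC (to_fract Q)) g +>\<^bsub>OK_ring (fC (to_fract Q))\<^esub> a})"
      using coset_Of[of p r s] X by blast
  qed
  also have "\<dots> = (\<lambda>(p,r,s). CS p r s) ` ({p. degree p < degree g} \<times> {p. degree p < degree g} \<times> {p. degree p < degree g})"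
  proof (intro equalityI subsetI)
    fix X assume "X \<in> {CS p r s | p r s. True}"
    then obtain p r s where X: "X = CS p r s" by auto
    then have "X = (\<lambda>(p,r,s). CS p r s) (p mod g, r mod g, s mod g)" using red by simp
    moreover have "(p mod g, r mod g, s mod g) \<in> {p. degree p < degree g} \<times> {p. degree p < degree g} \<times> {p. degree p < degree g}"
      using md by simp
    ultimately show "X \<in> (\<lambda>(p,r,s). CS p r s) ` ({p. degree p < degree g} \<times> {p. degree p < degree g} \<times> {p. degree p < degree g})"
      by blast
  qed auto
  finally show ?thesis .
qed

lemma card_SS: "card (carrier SS) = CARD('a)^(3 * degree g)"
proof -
  let ?T = "{p :: 'a poly. degree p < degree g}"
  have inj: "inj_on (\<lambda>(p,r,s). CS p r s) (?T \<times> ?T \<times> ?T)"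
    by (auto simp: inj_on_def CS_eq_iff intro: small_eq)
  have fin: "finite ?T"
  proof (rule ccontr)
    assume "infinite ?T" then have "card ?T = 0" by simp
    then show False using card_polys[OF dg, where 'a='a] by simp
  qed
  have "card (carrier SS) = card ?T * (card ?T * card ?T)"
    unfolding carrier_SS using inj fin by (simp add: card_image card_cartesian_product)
  also have "\<dots> = CARD('a)^(3 * degree g)"
    using card_polys[OF dg, where 'a='a] by (simp add: power_mult power3_eq_cube mult.commute)
  finally show ?thesis .
qed

lemma zero_I: "0 \<in> principal_OK (fC (to_fract Q)) g"
  unfolding I_eq by (auto intro!: exI[of _ 0] simp: Of_0)

lemma self_coset: "a \<in> principal_OK (fC (to_fract Q)) g +>\<^bsub>OK_ring (fC (to_fract Q))\<^esub> a"
  using zero_I by (force simp: coset_gen)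

lemma xpow_in:
  "xpow (to_fract Q) n \<in> (principal_OK (fC (to_fract Q)) g +>\<^bsub>OK_ring (fC (to_fract Q))\<^esub> tri 0 1 0) [^]\<^bsub>SS\<^esub> n"
proof (induction n)
  case 0
  show ?case using self_coset[of 1] by (simp add: nat_pow_def FactRing_def OK_ring_def)
next
  case (Suc n)
  let ?X = "principal_OK (fC (to_fract Q)) g +>\<^bsub>OK_ring (fC (to_fract Q))\<^esub> tri 0 1 0"
  have "?X [^]\<^bsub>SS\<^esub> Suc n = rcoset_mult (OK_ring (fC (to_fract Q))) (principal_OK (fC (to_fract Q)) g) (?X [^]\<^bsub>SS\<^esub> n) ?X"
    by (simp add: nat_pow_def FactRing_def)
  moreover have "xpow (to_fract Q) (Suc n) \<in> rcoset_mult (OK_ring (fC (to_fract Q))) (principal_OK (fC (to_fract Q)) g) (?X [^]\<^bsub>SS\<^esub> n) ?X"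
    unfolding rcoset_mult_def using Suc.IH self_coset[of "tri 0 1 0"]
      self_coset[of "(xpow (to_fract Q) n * tri 0 1 0) mod fC (to_fract Q)"]
    by (auto simp: OK_ring_def)
  ultimately show ?case by simp
qed

lemma not_carm:
  assumes N: "CARD('a)^(3 * degree g) mod 3 = 2"
  shows "\<not> carmichael_in (fC (to_fract Q)) g"
proof
  assume "carmichael_in (fC (to_fract Q)) g"
  then have cm: "\<forall>a\<in>carrier SS. a [^]\<^bsub>SS\<^esub> card (carrier SS) = a"
    by (simp add: carmichael_in_def carmichael_ideal_def carmichael_ring_def)
  let ?X = "principal_OK (fC (to_fract Q)) g +>\<^bsub>OK_ring (fC (to_fract Q))\<^esub> tri 0 1 0"
  have X: "?X = CS 0 1 0" using coset_Of[of 0 1 0] by (simp add: Of_def)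
  have Xc: "?X \<in> carrier SS" unfolding X carrier_SS using dg by (force intro!: image_eqI[of _ _ "(0,1,0)"])
  define N where "N = CARD('a)^(3 * degree g)"
  have "?X [^]\<^bsub>SS\<^esub> N = ?X" using cm Xc card_SS by (simp add: N_def)
  then have "xpow (to_fract Q) N \<in> CS 0 1 0" using xpow_in[of N] X by simp
  moreover have "xpow (to_fract Q) N = Of 0 0 (Q^(N div 3))"
    using N by (simp add: xpow_closed N_def Of_def)
  ultimately have "g dvd 0 - 1" by (simp add: Of_in_CS)
  then have "is_unit g" by simp
  then show False using dg by (simp add: unit_poly_iff)
qed

end


lemma numeral_unit: "(numeral k :: 'a::field) \<noteq> 0 \<Longrightarrow> is_unit (numeral k :: 'a poly)"
proof -
  assume "(numeral k :: 'a) \<noteq> 0"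
  then have "is_unit [:numeral k :: 'a:]" by (simp add: unit_poly_iff)
  moreover have "(numeral k :: 'a poly) = [:numeral k:]" by (simp add: numeral_poly)
  ultimately show ?thesis by simp
qed

lemma numeral_zero: "(numeral k :: 'a::field) = 0 \<Longrightarrow> (numeral k :: 'a poly) = 0"
  by (simp add: numeral_poly)

lemma R2:
  fixes Q a p r s :: "'a::field poly"
  assumes Q: "irreducible Q" and nq: "\<not> Q dvd a" and three: "(3::'a) \<noteq> 0"
    and h1: "Q dvd p^2 + 2*a*r*s" and h2: "Q dvd 2*p*r + a*s^2" and h3: "Q dvd r^2 + 2*p*s"
  shows "Q dvd p \<and> Q dvd r \<and> Q dvd s"
proof (cases "(2::'a) = 0")
  case True
  then have two: "(2::'a poly) = 0" by (rule numeral_zero)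
  have "Q dvd p^2" using h1 two by simp
  then have "Q dvd p" using irr_dvd_pow[OF Q] by blast
  moreover have "Q dvd a * s^2" using h2 two by simp
  then have "Q dvd s" using irr_dvd_mult[OF Q] irr_dvd_pow[OF Q] nq by blast
  moreover have "Q dvd r^2" using h3 two by simp
  then have "Q dvd r" using irr_dvd_pow[OF Q] by blast
  ultimately show ?thesis by simp
next
  case False
  have u2: "is_unit (2::'a poly)" using False by (rule numeral_unit)
  have "(9::'a) = 3 * 3" by simp
  then have "(9::'a) \<noteq> 0" using three by (metis mult_eq_0_iff)
  then have u9: "is_unit (9::'a poly)" by (rule numeral_unit)
  show ?thesis
  proof (cases "Q dvd p")
    case True
    have "Q dvd 2*a*r*s"
    proof -
      have "Q dvd p^2" using True by (simp add: power2_eq_square)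
      then show ?thesis using h1 by (metis add_diff_cancel_left' dvd_diff)
    qed
    then have "Q dvd a*(r*s)" using u2 by (simp add: mult.assoc dvd_mult_unit_iff')
    then have rs: "Q dvd r \<or> Q dvd s" using irr_dvd_mult[OF Q] nq by blast
    have "Q dvd 2*p*r" using True by (simp add: mult.commute mult.left_commute)
    then have "Q dvd a*s^2" using h2 by (metis add_diff_cancel_left' dvd_diff)
    then have qs: "Q dvd s" using irr_dvd_mult[OF Q] irr_dvd_pow[OF Q] nq by blast
    have "Q dvd 2*p*s" using True by (simp add: mult.commute mult.left_commute)
    then have "Q dvd r^2" using h3 by (metis add_diff_cancel_right' dvd_diff)
    then have "Q dvd r" using irr_dvd_pow[OF Q] by blast
    with True qs show ?thesis by simp
  next
    case np: False
    define E1 where "E1 = p^2 + 2*a*r*s"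
    define E2 where "E2 = 2*p*r + a*s^2"
    define E3 where "E3 = r^2 + 2*p*s"
    have i1: "r * (8*p^3 + a*r^3) = 4*p^2*E2 - a*E3*(E3 - 2*r^2)"
      by (simp add: E2_def E3_def algebra_simps power2_eq_square power3_eq_cube)
    have i2: "2 * (p^3 - a*r^3) = 2*p*E1 - 2*a*r*E3"
      by (simp add: E1_def E3_def algebra_simps power2_eq_square power3_eq_cube)
    have hE1: "Q dvd E1" using h1 by (simp add: E1_def)
    have hE2: "Q dvd E2" using h2 by (simp add: E2_def)
    have hE3: "Q dvd E3" using h3 by (simp add: E3_def)
    have d1: "Q dvd r * (8*p^3 + a*r^3)" unfolding i1
      by (rule dvd_diff[OF dvd_mult[OF hE2] dvd_mult2[OF dvd_mult[OF hE3]]])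
    have "Q dvd 2 * (p^3 - a*r^3)" unfolding i2
      by (rule dvd_diff[OF dvd_mult[OF hE1] dvd_mult[OF hE3]])
    then have d2: "Q dvd p^3 - a*r^3" using dvd_mult_unit_iff'[OF u2] by blast
    have eq9: "9 * (r * p^3) = r * (8*p^3 + a*r^3) + r * (p^3 - a*r^3)" by (simp add: algebra_simps)
    have "Q dvd 9 * (r * p^3)" unfolding eq9 by (rule dvd_add[OF d1 dvd_mult[OF d2]])
    then have "Q dvd r * p^3" using u9 by (simp add: dvd_mult_unit_iff')
    then have qr: "Q dvd r" using irr_dvd_mult[OF Q] irr_dvd_pow[OF Q] np by blast
    then have "Q dvd a*r^3" by (simp add: power3_eq_cube)
    moreover have "p^3 = (p^3 - a*r^3) + a*r^3" by simp
    ultimately have "Q dvd p^3" using d2 by (metis dvd_add)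
    then have "Q dvd p" using irr_dvd_pow[OF Q] by blast
    with np show ?thesis by simp
  qed
qed

lemma tmul_comm: "tmul C u v = tmul C v u"
  by (cases u; cases v) (simp add: tmul_def algebra_simps)

lemma tmul_assoc: "tmul C (tmul C u v) w = tmul C u (tmul C v w)"
  by (cases u; cases v; cases w) (simp add: tmul_def algebra_simps)

lemma tmul_sq: "tmul C (a,b,c) (a,b,c) = (a^2 + 2*C*b*c, 2*a*b + C*c^2, b^2 + 2*a*c)"
  by (simp add: tmul_def algebra_simps power2_eq_square)

definition sc :: "'b::comm_ring_1 \<Rightarrow> 'b\<times>'b\<times>'b \<Rightarrow> 'b\<times>'b\<times>'b" where
  "sc k u = (case u of (a,b,c) \<Rightarrow> (k*a, k*b, k*c))"

lemma tmul_sc: "tmul C (sc k u) (sc l v) = sc (k*l) (tmul C u v)"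
  by (cases u; cases v) (simp add: tmul_def sc_def algebra_simps)

lemma NI_A:
  fixes Q Q' p r s :: "'a::field poly"
  assumes Q: "irreducible Q" and nq: "\<not> Q dvd Q'" and three: "(3::'a) \<noteq> 0"
    and e: "tmul Q' (tmul Q' (p,r,s) (p,r,s)) (p,r,s) = (Q,0,0)"
  shows False
proof -
  let ?u = "(p,r,s)"
  define d0 where "d0 = p^2 + 2*Q'*r*s"
  define d1 where "d1 = 2*p*r + Q'*s^2"
  define d2 where "d2 = r^2 + 2*p*s"
  have d: "tmul Q' ?u ?u = (d0,d1,d2)" by (simp add: tmul_sq d0_def d1_def d2_def)
  have "tmul Q' (d0,d1,d2) (d0,d1,d2) = tmul Q' ?u (tmul Q' (tmul Q' ?u ?u) ?u)"
  proof -
    have "tmul Q' (tmul Q' ?u ?u) ?u = tmul Q' ?u (tmul Q' ?u ?u)" by (rule tmul_comm)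
    moreover have "tmul Q' (tmul Q' ?u ?u) (tmul Q' ?u ?u) = tmul Q' ?u (tmul Q' ?u (tmul Q' ?u ?u))" by (rule tmul_assoc)
    ultimately show ?thesis unfolding d[symmetric] by simp
  qed
  also have "\<dots> = tmul Q' ?u (Q,0,0)" by (simp only: e)
  also have "\<dots> = (Q*p, Q*r, Q*s)" by (simp add: tmul_def)
  finally have dd: "(d0^2 + 2*Q'*d1*d2, 2*d0*d1 + Q'*d2^2, d1^2 + 2*d0*d2) = (Q*p, Q*r, Q*s)"
    by (simp only: tmul_sq)
  then have "Q dvd d0^2 + 2*Q'*d1*d2" "Q dvd 2*d0*d1 + Q'*d2^2" "Q dvd d1^2 + 2*d0*d2"
    by (simp_all only: prod.inject) (metis dvd_triv_left)+
  then have qd: "Q dvd d0" "Q dvd d1" "Q dvd d2" using R2[OF Q nq three] by blast+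
  then have "Q dvd p" "Q dvd r" "Q dvd s" using R2[OF Q nq three, of p r s] unfolding d0_def d1_def d2_def by blast+
  then obtain p' r' s' where pp: "p = Q*p'" "r = Q*r'" "s = Q*s'" by (auto elim!: dvdE)
  have u: "?u = sc Q (p',r',s')" by (simp add: sc_def pp)
  obtain x y z where xyz: "tmul Q' (tmul Q' (p',r',s') (p',r',s')) (p',r',s') = (x,y,z)"
    by (cases "tmul Q' (tmul Q' (p',r',s') (p',r',s')) (p',r',s')")
  have "(Q,0,0) = tmul Q' (tmul Q' ?u ?u) ?u" using e by simp
  also have "\<dots> = sc (Q*Q*Q) (x,y,z)" unfolding u tmul_sc xyz ..
  finally have "Q = Q*Q*Q*x" by (simp add: sc_def)
  then have "Q * 1 = Q * (Q*Q*x)" by (simp add: ac_simps)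
  moreover have "Q \<noteq> 0" using Q by (auto simp: irreducible_def)
  ultimately have "1 = Q * (Q*x)" by (simp add: ac_simps)
  then have "is_unit Q" by (metis dvd_triv_left)
  then show False using Q by (simp add: irreducible_def)
qed


definition tf :: "'a::idom \<times> 'a \<times> 'a \<Rightarrow> 'a fract \<times> 'a fract \<times> 'a fract" where
  "tf u = (case u of (a,b,c) \<Rightarrow> (to_fract a, to_fract b, to_fract c))"

lemma tmul_tf: "tmul (to_fract C) (tf u) (tf v) = tf (tmul C u v)"
  by (cases u; cases v) (simp add: tmul_def tf_def)

lemma tf_inj: "tf u = tf v \<longleftrightarrow> u = v"
  by (cases u; cases v) (simp add: tf_def)

lemma noniso:
  fixes Q Q' :: "'a::{finite,field} poly"
  assumes Q: "irreducible Q" and Q': "irreducible Q'" and nq: "\<not> Q dvd Q'" and three: "(3::'a) \<noteq> 0"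
  shows "\<not> ext_iso (fC (to_fract Q)) (fC (to_fract Q'))"
proof
  let ?f = "fC (to_fract Q)" and ?f' = "fC (to_fract Q')"
  assume "ext_iso ?f ?f'"
  then obtain \<phi> where \<phi>: "\<phi> \<in> ring_iso (ext_field ?f) (ext_field ?f')" and fx: "\<And>c. \<phi> [:c:] = [:c:]"
    by (auto simp: ext_iso_def)
  then have hom: "\<phi> \<in> ring_hom (ext_field ?f) (ext_field ?f')" by (simp add: ring_iso_def)
  let ?x = "tri 0 1 (0::'a poly fract)"
  have xc: "?x \<in> carrier (ext_field ?f)" by (simp add: ext_field_def degree_tri degree_fC)
  have x2c: "tri 0 0 1 \<in> carrier (ext_field ?f)" by (simp add: ext_field_def degree_tri degree_fC)
  have x2: "?x \<otimes>\<^bsub>ext_field ?f\<^esub> ?x = tri 0 0 1" by (simp add: ext_field_def tri_mult_mod)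
  have x3: "tri 0 0 1 \<otimes>\<^bsub>ext_field ?f\<^esub> ?x = [:to_fract Q:]" by (simp add: ext_field_def tri_mult_mod tri_a00)
  define y where "y = \<phi> ?x"
  have yc: "y \<in> carrier (ext_field ?f')" using hom xc unfolding y_def ring_hom_def by auto
  have "\<phi> (?x \<otimes>\<^bsub>ext_field ?f\<^esub> ?x) = y \<otimes>\<^bsub>ext_field ?f'\<^esub> y"
    using hom xc unfolding y_def ring_hom_def by blast
  then have py2: "\<phi> (tri 0 0 1) = (y * y) mod ?f'" unfolding x2 by (simp add: ext_field_def)
  have "\<phi> (tri 0 0 1 \<otimes>\<^bsub>ext_field ?f\<^esub> ?x) = \<phi> (tri 0 0 1) \<otimes>\<^bsub>ext_field ?f'\<^esub> y"
    using hom xc x2c unfolding y_def ring_hom_def by blast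
  then have y3: "((y * y) mod ?f' * y) mod ?f' = [:to_fract Q:]" unfolding x3 fx py2 by (simp add: ext_field_def)
  have degy: "degree y < 3" using yc by (simp add: ext_field_def degree_fC)
  have "y \<in> integral_closure ?f'"
    unfolding integral_iff
  proof (intro conjI exI[of _ "[:-Q, 0, 0, 1:]"])
    show "degree y < degree ?f'" using degy by (simp add: degree_fC)
    show "lead_coeff [:-Q, 0, 0, 1:] = 1" by simp
    have e1: "pcompose (fract_poly [:-Q, 0, 0, 1:]) y = [:- to_fract Q:] + y * y * y"
      by (simp add: map_poly_pCons pcompose_pCons algebra_simps)
    have e2: "(y * y * y) mod ?f' = [:to_fract Q:]" using y3 by (simp add: mod_mult_left_eq)
    have "pcompose (fract_poly [:-Q, 0, 0, 1:]) y mod ?f' = ([:- to_fract Q:] + (y * y * y) mod ?f') mod ?f'"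
      unfolding e1 by (simp only: mod_add_right_eq)
    also have "\<dots> = 0" unfolding e2 by simp
    finally show "pcompose (fract_poly [:-Q, 0, 0, 1:]) y mod ?f' = 0" .
  qed
  then obtain p r s where yps: "y = tri (to_fract p) (to_fract r) (to_fract s)" using OK_sub[OF Q' three] by blast
  have yt: "y = trp (tf (p,r,s))" by (simp add: yps trp_def tf_def)
  have "trp (tf (tmul Q' (tmul Q' (p,r,s) (p,r,s)) (p,r,s))) = trp (tf (Q,0,0))"
  proof -
    have "((trp (tf (p,r,s)) * trp (tf (p,r,s))) mod ?f' * trp (tf (p,r,s))) mod ?f'
        = trp (tf (tmul Q' (tmul Q' (p,r,s) (p,r,s)) (p,r,s)))"
      by (simp only: trp_mult_mod tmul_tf)
    moreover have "trp (tf (Q,0,0)) = [:to_fract Q:]" by (simp add: trp_def tf_def tri_a00)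
    ultimately show ?thesis using y3 unfolding yt by simp
  qed
  then have "tf (tmul Q' (tmul Q' (p,r,s) (p,r,s)) (p,r,s)) = tf (Q,0,0)"
    by (cases "tf (tmul Q' (tmul Q' (p,r,s) (p,r,s)) (p,r,s))") (simp add: trp_def tf_def)
  then have "tmul Q' (tmul Q' (p,r,s) (p,r,s)) (p,r,s) = (Q,0,0)" by (simp add: tf_inj)
  then show False by (rule NI_A[OF Q nq three])
qed


lemma three_ne:
  assumes "\<not> 3 dvd CARD('a::{finite,field})"
  shows "(3::'a) \<noteq> 0"
proof
  assume h: "(3::'a) = 0"
  have "of_nat 3 = (0::'a)" using h by simp
  then have c3: "CHAR('a) dvd 3" by (simp only: of_nat_eq_0_iff_char_dvd)
  have cc: "CHAR('a) dvd CARD('a)" by (rule CHAR_dvd_CARD)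
  have le: "CHAR('a) \<le> 3" using c3 by (intro dvd_imp_le) auto
  have n0: "CHAR('a) \<noteq> 0" using c3 by (intro notI) simp
  have n2: "CHAR('a) \<noteq> 2" using c3 by (intro notI) simp
  have "CHAR('a) = 1 \<or> CHAR('a) = 3" using le n0 n2 by linarith
  moreover have "CHAR('a) \<noteq> 1"
  proof
    assume "CHAR('a) = 1"
    then have "of_nat 1 = (0::'a)" by (metis of_nat_CHAR)
    then show False by simp
  qed
  ultimately have "CHAR('a) = 3" by simp
  with cc assms show False by simp
qed


lemma card_mod3:
  assumes "\<not> 3 dvd CARD('a::{finite,field})" "\<not> 3 dvd (CARD('a) - 1)"
  shows "CARD('a) mod 3 = 2"
proof -
  have "CARD('a) > 0" by simp
  then show ?thesis using assms by presburger
qed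

lemma pow2_mod3: "odd n \<Longrightarrow> (2::nat)^n mod 3 = 2"
proof -
  assume "odd n"
  then obtain m where n: "n = 2*m + 1" by (metis oddE)
  have "(4::nat)^m mod 3 = 1"
  proof (induction m)
    case 0 then show ?case by simp
  next
    case (Suc m)
    have "(4::nat)^Suc m mod 3 = (4 * 4^m) mod 3" by simp
    also have "\<dots> = ((4 mod 3) * (4^m mod 3)) mod 3" by (simp only: mod_mult_eq)
    also have "\<dots> = 1" using Suc by simp
    finally show ?case .
  qed
  have "(2::nat)^n = 2 * 4^m" by (simp add: n power_mult)
  then have "(2::nat)^n mod 3 = ((2 mod 3) * (4^m mod 3)) mod 3" by (simp only: mod_mult_eq)
  also have "\<dots> = 2" using \<open>(4::nat)^m mod 3 = 1\<close> by simp
  finally show ?thesis .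
qed

lemma N_mod3:
  assumes "(q::nat) mod 3 = 2" "odd d"
  shows "q^(3*d) mod 3 = 2"
proof -
  have "q^(3*d) mod 3 = (q mod 3)^(3*d) mod 3" by (simp add: power_mod)
  also have "\<dots> = 2" using assms pow2_mod3[of "3*d"] by simp
  finally show ?thesis .
qed

lemma infinite_Qs:
  fixes g :: "'a::field poly"
  assumes dg: "degree g > 0"
  shows "infinite {Q. irreducible Q \<and> lead_coeff Q = 1 \<and> \<not> Q dvd g}"
proof
  let ?S = "{Q. irreducible Q \<and> lead_coeff Q = 1 \<and> \<not> Q dvd g}"
  assume fin: "finite ?S"
  define M where "M = g * prod id ?S + 1"
  have g0: "g \<noteq> 0" using dg by auto
  have "\<forall>Q\<in>?S. Q \<noteq> 0" using irr_nonunit by blast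
  then have p0: "prod id ?S \<noteq> 0" using fin by (simp add: prod_zero_iff)
  have "degree (g * prod id ?S) \<ge> degree g" using g0 p0 by (simp add: degree_mult_eq)
  then have lt: "degree (1::'a poly) < degree (g * prod id ?S)" using dg by simp
  have "degree M = degree (g * prod id ?S)" unfolding M_def by (rule degree_add_eq_left[OF lt])
  then have dM: "degree M > 0" using lt by simp
  obtain P where P: "irreducible P" "P dvd M" "lead_coeff P = 1" using irr_factor_exists[OF dM] by blast
  have nu: "\<not> P dvd 1" using P(1) by (simp add: irreducible_def)
  show False
  proof (cases "P dvd g")
    case True
    then have "P dvd g * prod id ?S" by simp
    then have "P dvd M - g * prod id ?S" by (rule dvd_diff[OF P(2)])
    then have "P dvd 1" by (simp add: M_def)
    with nu show False by simp
  next
    case False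
    then have "P \<in> ?S" using P by simp
    then have "id P dvd prod id ?S" using fin by (intro dvd_prodI)
    then have "P dvd prod id ?S" by simp
    then have "P dvd g * prod id ?S" by simp
    then have "P dvd M - g * prod id ?S" by (rule dvd_diff[OF P(2)])
    then have "P dvd 1" by (simp add: M_def)
    with nu show False by simp
  qed
qed

lemma monic_ndvd:
  fixes Q Q' :: "'a::field poly"
  assumes Q: "irreducible Q" and Q': "irreducible Q'" and m: "lead_coeff Q = 1" "lead_coeff Q' = 1"
    and ne: "Q \<noteq> Q'"
  shows "\<not> Q dvd Q'"
proof
  assume "Q dvd Q'"
  then obtain w where w: "Q' = Q * w" by auto
  have "is_unit Q \<or> is_unit w" using Q' w by (simp add: irreducible_def)
  then have wu: "is_unit w" using Q by (auto simp: irreducible_def)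
  then have "w \<noteq> 0" "degree w = 0" by (auto simp: unit_poly_iff)
  then have wc: "w = [:lead_coeff w:]" by (simp add: degree_0_id)
  have "lead_coeff Q' = lead_coeff Q * lead_coeff w" by (simp add: w lead_coeff_mult)
  then have "lead_coeff w = 1" using m by simp
  then have "w = 1" using wc by (simp add: one_pCons)
  then show False using w ne by simp
qed


theorem theorem5p2:
  fixes g :: "'a::{finite,field} poly"
  assumes "squarefree g" and "odd (degree g)"
    and "\<not> 3 dvd CARD('a)" and "\<not> 3 dvd (CARD('a) - 1)"
  shows "\<exists>F :: 'a ffrac poly set. infinite F \<and>
    (\<forall>f\<in>F. cubic_poly f \<and> rel_prime_to (disc_ideal f) g \<and> \<not> carmichael_in f g) \<and>
    (\<forall>f\<in>F. \<forall>h\<in>F. f \<noteq> h \<longrightarrow> \<not> ext_iso f h)"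
proof -
  have three: "(3::'a) \<noteq> 0" using assms(3) by (rule three_ne)
  have dg: "degree g > 0" using assms(2) by (cases "degree g") auto
  have Nm3: "CARD('a)^(3 * degree g) mod 3 = 2"
    using N_mod3[OF card_mod3[OF assms(3,4)] assms(2)] .
  define Qs where "Qs = {Q :: 'a poly. irreducible Q \<and> lead_coeff Q = 1 \<and> \<not> Q dvd g}"
  define F where "F = (\<lambda>Q. fC (to_fract Q)) ` Qs"
  have inj: "inj_on (\<lambda>Q::'a poly. fC (to_fract Q)) Qs"
  proof (rule inj_onI)
    fix Q Q' :: "'a poly" assume "fC (to_fract Q) = fC (to_fract Q')"
    then have "coeff (fC (to_fract Q)) 0 = coeff (fC (to_fract Q')) 0" by simp
    then show "Q = Q'" by (simp add: fC_def)
  qed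
  have "infinite Qs" unfolding Qs_def by (rule infinite_Qs[OF dg])
  then have infF: "infinite F" unfolding F_def using inj finite_imageD by blast
  have props: "cubic_poly f \<and> rel_prime_to (disc_ideal f) g \<and> \<not> carmichael_in f g" if "f \<in> F" for f
  proof -
    from that obtain Q where Q: "Q \<in> Qs" and f: "f = fC (to_fract Q)" unfolding F_def by auto
    have Qi: "irreducible Q" and nd: "\<not> Q dvd g" using Q by (auto simp: Qs_def)
    have "cubic_poly f" unfolding f cubic_poly_def using fC_irred[OF Qi] by (simp add: degree_fC)
    moreover have "rel_prime_to (disc_ideal f) g" unfolding f by (rule rel_prime_disc[OF Qi three nd])
    moreover have "\<not> carmichael_in f g" unfolding f by (rule not_carm[OF Qi three dg Nm3])
    ultimately show ?thesis by blast
  qed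
  have noni: "\<not> ext_iso f h" if "f \<in> F" "h \<in> F" "f \<noteq> h" for f h
  proof -
    from that obtain Q Q' where Q: "Q \<in> Qs" "f = fC (to_fract Q)" and Q': "Q' \<in> Qs" "h = fC (to_fract Q')"
      unfolding F_def by auto
    have ne: "Q \<noteq> Q'" using that Q Q' by auto
    have "\<not> Q dvd Q'" using Q(1) Q'(1) ne by (intro monic_ndvd) (auto simp: Qs_def)
    then show ?thesis unfolding Q(2) Q'(2) using noniso Q(1) Q'(1) three by (auto simp: Qs_def)
  qed
  show ?thesis using infF props noni by blast
qed


end
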